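(* Suppose that for all $0\le t\le T$, $\lambda_{\min}\big(\mathbf{G}(t)+\frac{1}{\alpha^2}\mathbf{V}(t)\big)\ge\frac{\omega}{2}$ for some $\omega>0$, and $|g_k(t)-g_k(0)|\le R_g$ for all $k$, where $R_g\le 1/(m/\delta)^{1/d}$. Then with probability at least $1-\delta$ over the initialization, $$\|\mathbf{v}_k(t)-\mathbf{v}_k(0)\|_2\le\frac{4\sqrt n\,\|\mathbf{f}(0)-\mathbf{y}\|_2}{\alpha\,\omega\sqrt m}$$ for each $k$ and all $0\le t\le T$.
   Context: Data $(\mathbf{x}_i,y_i)\in\mathbb{R}^d\times\mathbb{R}$, $i=1,\dots,n$, with $\|\mathbf{x}_i\|_2\le1$. Network $f(\mathbf{x})=\frac{1}{\sqrt m}\sum_{k=1}^mc_k\sigma(g_k\mathbf{v}_k^\top\mathbf{x}/\|\mathbf{v}_k\|_2)$, $\sigma(s)=\max\{s,0\}$; initialization with $\alpha>0$: independently $\mathbf{v}_k(0)\sim N(0,\alpha^2\mathbf{I})$, $c_k$ uniform on $\{-1,1\}$, $g_k(0)=\|\mathbf{v}_k(0)\|_2/\alpha$. Gradient flow on $L=\frac12\sum_i(f(\mathbf{x}_i)-y_i)^2$: $\frac{d\mathbf{v}_k}{dt}=-\partial L/\partial\mathbf{v}_k$, $\frac{dg_k}{dt}=-\partial L/\partial g_k$, $c_k$ fixed; $\mathbf{f}(t)$ predictions, $\mathbf{y}$ targets. Notation: $\mathbf{x}^{\mathbf{u}^\perp}=\mathbf{x}-\mathbf{u}\mathbf{u}^\top\mathbf{x}/\|\mathbf{u}\|_2^2$,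 $\mathbb{1}_{ik}(t)=\mathbb{1}\{\mathbf{v}_k(t)^\top\mathbf{x}_i\ge0\}$, $\mathbf{V}_{ij}(t)=\frac1m\sum_k\big(\frac{\alpha c_kg_k(t)}{\|\mathbf{v}_k(t)\|_2}\big)^2\langle\mathbf{x}_i^{\mathbf{v}_k(t)^\perp},\mathbf{x}_j^{\mathbf{v}_k(t)^\perp}\rangle\mathbb{1}_{ik}(t)\mathbb{1}_{jk}(t)$, $\mathbf{G}_{ij}(t)=\frac1m\sum_k\sigma(\mathbf{v}_k(t)^\top\mathbf{x}_i)\sigma(\mathbf{v}_k(t)^\top\mathbf{x}_j)/\|\mathbf{v}_k(t)\|_2^2$. Under gradient flow the predictions evolve as $\frac{d\mathbf{f}}{dt}=-(\mathbf{V}(t)/\alpha^2+\mathbf{G}(t))(\mathbf{f}(t)-\mathbf{y})$. *)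

theory Defs
  imports "HOL-Probability.Probability"
begin

text \<open>Vectors of R^d are represented as functions nat => real, only indices j < d matter.
  Data: x i j (i < n, j < d), targets y i.  Neuron k (k < m): direction v k, scale g k, sign c k.\<close>

definition dotp :: "nat \<Rightarrow> (nat \<Rightarrow> real) \<Rightarrow> (nat \<Rightarrow> real) \<Rightarrow> real" where
  "dotp d u w = (\<Sum>j<d. u j * w j)"

definition vnorm :: "nat \<Rightarrow> (nat \<Rightarrow> real) \<Rightarrow> real" where
  "vnorm d u = sqrt (\<Sum>j<d. (u j)^2)"

definition relu :: "real \<Rightarrow> real" where
  "relu s = max s 0"

definition perp :: "nat \<Rightarrow> (nat \<Rightarrow> real) \<Rightarrow> (nat \<Rightarrow> real) \<Rightarrow> nat \<Rightarrow> real" where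
  "perp d u w = (\<lambda>j. w j - u j * dotp d u w / (vnorm d u)^2)"

definition ind :: "bool \<Rightarrow> real" where
  "ind b = (if b then 1 else 0)"

definition fnet :: "nat \<Rightarrow> nat \<Rightarrow> (nat \<Rightarrow> real) \<Rightarrow> (nat \<Rightarrow> real) \<Rightarrow> (nat \<Rightarrow> nat \<Rightarrow> real)
    \<Rightarrow> (nat \<Rightarrow> real) \<Rightarrow> real" where
  "fnet m d c g v z = (1 / sqrt m) * (\<Sum>k<m. c k * relu (g k * dotp d (v k) z / vnorm d (v k)))"

text \<open>partial derivative of L = 1/2 sum_i (f(x_i)-y_i)^2 w.r.t. v_k (component j), with the
  ReLU convention sigma'(s) = 1{s >= 0} as in the paper\<close>
definition grad_v :: "nat \<Rightarrow> nat \<Rightarrow> nat \<Rightarrow> (nat \<Rightarrow> nat \<Rightarrow> real) \<Rightarrow> (nat \<Rightarrow> real)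
    \<Rightarrow> (nat \<Rightarrow> real) \<Rightarrow> (nat \<Rightarrow> real) \<Rightarrow> (nat \<Rightarrow> nat \<Rightarrow> real) \<Rightarrow> nat \<Rightarrow> nat \<Rightarrow> real" where
  "grad_v n m d x y c g v k j =
     (1 / sqrt m) * (\<Sum>i<n. (fnet m d c g v (x i) - y i) * c k * g k / vnorm d (v k)
        * ind (dotp d (v k) (x i) \<ge> 0) * perp d (v k) (x i) j)"

definition grad_g :: "nat \<Rightarrow> nat \<Rightarrow> nat \<Rightarrow> (nat \<Rightarrow> nat \<Rightarrow> real) \<Rightarrow> (nat \<Rightarrow> real)
    \<Rightarrow> (nat \<Rightarrow> real) \<Rightarrow> (nat \<Rightarrow> real) \<Rightarrow> (nat \<Rightarrow> nat \<Rightarrow> real) \<Rightarrow> nat \<Rightarrow> real" where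
  "grad_g n m d x y c g v k =
     (1 / sqrt m) * (\<Sum>i<n. (fnet m d c g v (x i) - y i) * c k
        * relu (dotp d (v k) (x i)) / vnorm d (v k))"

definition Vmat :: "nat \<Rightarrow> nat \<Rightarrow> real \<Rightarrow> (nat \<Rightarrow> nat \<Rightarrow> real) \<Rightarrow> (nat \<Rightarrow> real)
    \<Rightarrow> (nat \<Rightarrow> real) \<Rightarrow> (nat \<Rightarrow> nat \<Rightarrow> real) \<Rightarrow> nat \<Rightarrow> nat \<Rightarrow> real" where
  "Vmat m d \<alpha> x c g v i i' = (1 / real m) * (\<Sum>k<m. (\<alpha> * c k * g k / vnorm d (v k))^2
      * dotp d (perp d (v k) (x i)) (perp d (v k) (x i'))
      * ind (dotp d (v k) (x i) \<ge> 0) * ind (dotp d (v k) (x i') \<ge> 0))"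

definition Gmat :: "nat \<Rightarrow> nat \<Rightarrow> (nat \<Rightarrow> nat \<Rightarrow> real) \<Rightarrow> (nat \<Rightarrow> nat \<Rightarrow> real)
    \<Rightarrow> nat \<Rightarrow> nat \<Rightarrow> real" where
  "Gmat m d x v i i' = (1 / real m) * (\<Sum>k<m. relu (dotp d (v k) (x i)) * relu (dotp d (v k) (x i'))
      / (vnorm d (v k))^2)"

definition is_eigenvalue :: "nat \<Rightarrow> (nat \<Rightarrow> nat \<Rightarrow> real) \<Rightarrow> real \<Rightarrow> bool" where
  "is_eigenvalue n A e \<longleftrightarrow> (\<exists>u. (\<exists>i<n. u i \<noteq> 0) \<and> (\<forall>i<n. (\<Sum>j<n. A i j * u j) = e * u i))"

definition lambda_min :: "nat \<Rightarrow> (nat \<Rightarrow> nat \<Rightarrow> real) \<Rightarrow> real" where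
  "lambda_min n A = Min {e. is_eigenvalue n A e}"

text \<open>Initialization distribution: v_k(0) ~ N(0, alpha^2 I_d) i.i.d. (coordinates i.i.d. N(0,alpha^2)),
  c_k uniform on {-1,1}, all independent.  Sample point: (V, c) with V k j, c k.\<close>
definition init_measure :: "nat \<Rightarrow> nat \<Rightarrow> real \<Rightarrow> ((nat \<Rightarrow> nat \<Rightarrow> real) \<times> (nat \<Rightarrow> real)) measure" where
  "init_measure m d \<alpha> =
     (PiM {..<m} (\<lambda>_. PiM {..<d} (\<lambda>_. density lborel (normal_density 0 \<alpha>))))
     \<Otimes>\<^sub>M (PiM {..<m} (\<lambda>_. measure_pmf (pmf_of_set {-1, 1::real})))"

definition grad_flow ::
  "nat \<Rightarrow> nat \<Rightarrow> nat \<Rightarrow> (nat \<Rightarrow> nat \<Rightarrow> real) \<Rightarrow> (nat \<Rightarrow> real) \<Rightarrow> real \<Rightarrow> real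
   \<Rightarrow> (nat \<Rightarrow> nat \<Rightarrow> real) \<Rightarrow> (nat \<Rightarrow> real)
   \<Rightarrow> (real \<Rightarrow> nat \<Rightarrow> nat \<Rightarrow> real) \<Rightarrow> (real \<Rightarrow> nat \<Rightarrow> real) \<Rightarrow> bool" where
  "grad_flow n m d x y \<alpha> T V c v g \<longleftrightarrow>
     (\<forall>k<m. \<forall>j<d. v 0 k j = V k j) \<and>
     (\<forall>k<m. g 0 k = vnorm d (V k) / \<alpha>) \<and>
     (\<forall>t\<in>{0..T}. \<forall>k<m. \<forall>j<d.
        ((\<lambda>s. v s k j) has_real_derivative (- grad_v n m d x y c (g t) (v t) k j)) (at t within {0..T})) \<and>
     (\<forall>t\<in>{0..T}. \<forall>k<m.
        ((\<lambda>s. g s k) has_real_derivative (- grad_g n m d x y c (g t) (v t) k)) (at t within {0..T}))"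

end

theory Submission
  imports Defs "Jordan_Normal_Form.Determinant" "Jordan_Normal_Form.Char_Poly"
begin



lemma deriv_neg_right:
  fixes chi :: "real \<Rightarrow> real"
  assumes "(chi has_real_derivative D) (at t within {a..b})" "D < 0" "t < b" "a \<le> t"
  shows "\<exists>s. t < s \<and> s \<le> b \<and> chi s < chi t"
proof -
  have "((\<lambda>y. (chi y - chi t) / (y - t)) \<longlongrightarrow> D) (at t within {a..b})"
    using assms(1) by (simp add: has_field_derivative_iff)
  then have "eventually (\<lambda>y. (chi y - chi t) / (y - t) < 0) (at t within {a..b})"
    using assms(2) by (simp add: order_tendsto_iff)
  then obtain e where e: "e > 0" and P: "\<And>y. y \<in> {a..b} \<Longrightarrow> y \<noteq> t \<Longrightarrow> dist y t < e \<Longrightarrow> (chi y - chi t) / (y - t) < 0"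
    unfolding eventually_at by blast
  define s where "s = min b (t + e/2)"
  have s1: "t < s" "s \<le> b" using e assms by (auto simp: s_def)
  have "(chi s - chi t) / (s - t) < 0"
    using P[of s] s1 e assms by (auto simp: s_def dist_real_def)
  then have "chi s - chi t < 0" using s1 by (simp add: divide_less_0_iff)
  then show ?thesis using s1 by auto
qed

lemma mono_countable:
  fixes \<psi> :: "real \<Rightarrow> real"
  assumes ab: "a \<le> b" and cont: "continuous_on {a..b} \<psi>" and cS: "countable S"
    and der: "\<And>t. t \<in> {a..<b} \<Longrightarrow> t \<notin> S \<Longrightarrow> \<exists>D. (\<psi> has_real_derivative D) (at t within {a..b}) \<and> D \<le> 0"
  shows "\<psi> b \<le> \<psi> a"
proof (rule ccontr)
  assume "\<not> \<psi> b \<le> \<psi> a"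
  then have gt: "\<psi> b > \<psi> a" by simp
  then have ab': "a < b" using ab by (cases "a = b") auto
  define \<epsilon> where "\<epsilon> = (\<psi> b - \<psi> a) / (2 * (b - a))"
  have eps: "\<epsilon> > 0" using gt ab' by (simp add: \<epsilon>_def)
  define chi where "chi = (\<lambda>t. \<psi> t - \<epsilon> * (t - a))"
  have chia: "chi a = \<psi> a" by (simp add: chi_def)
  have "\<epsilon> * (b - a) = (\<psi> b - \<psi> a) / 2" using ab' by (auto simp: \<epsilon>_def field_simps)
  then have chib: "chi b = \<psi> b - (\<psi> b - \<psi> a) / 2" by (simp add: chi_def)
  have lt: "chi a < chi b" using chia chib gt by (simp add: field_simps)
  have contc: "continuous_on {a..b} chi" unfolding chi_def by (intro continuous_intros cont)
  obtain y where y: "y \<in> {chi a<..<chi b}" "y \<notin> chi ` S"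
    using real_interval_avoid_countable_set[OF lt countable_image[OF cS]] by blast
  define Z where "Z = {t \<in> {a..b}. chi t = y}"
  have Zne: "Z \<noteq> {}"
  proof -
    obtain t where "t \<in> {a..b}" "chi t = y"
      using IVT'[of chi a y b] y contc ab by auto
    then show ?thesis by (auto simp: Z_def)
  qed
  have Zcl: "closed Z"
  proof -
    have "Z = {a..b} \<inter> chi -` {y}" by (auto simp: Z_def)
    moreover have "closed ({a..b} \<inter> chi -` {y})"
      using continuous_closed_preimage[OF contc closed_atLeastAtMost closed_singleton]
      by (simp add: Int_commute vimage_def) 
    ultimately show ?thesis by simp
  qed
  have Zbd: "bdd_above Z" by (auto simp: Z_def bdd_above_def)
  define t0 where "t0 = Sup Z"
  have t0Z: "t0 \<in> Z" using closed_contains_Sup[OF Zne Zbd Zcl] by (simp add: t0_def)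
  have t0max: "\<And>t. t \<in> Z \<Longrightarrow> t \<le> t0" using Zbd by (simp add: t0_def cSup_upper)
  have t0ab: "t0 \<in> {a..b}" "chi t0 = y" using t0Z by (auto simp: Z_def)
  have "t0 \<noteq> b" using t0ab y by auto
  then have t0b: "t0 < b" using t0ab by auto
  have t0S: "t0 \<notin> S" using t0ab y by auto
  obtain D where D: "(\<psi> has_real_derivative D) (at t0 within {a..b})" "D \<le> 0"
    using der[of t0] t0ab t0b t0S by auto
  have "(chi has_real_derivative (D - \<epsilon>)) (at t0 within {a..b})"
    unfolding chi_def by (auto intro!: derivative_eq_intros D(1))
  then obtain s where s: "t0 < s" "s \<le> b" "chi s < chi t0"
    using deriv_neg_right[of chi "D - \<epsilon>" t0 a b] D(2) eps t0b t0ab by auto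
  have "continuous_on {s..b} chi" using contc t0ab s by (auto elim: continuous_on_subset)
  then obtain t' where t': "t' \<in> {s..b}" "chi t' = y"
    using IVT'[of chi s y b] s t0ab y by auto
  then have "t' \<in> Z" using t0ab s by (auto simp: Z_def)
  then have "t' \<le> t0" by (rule t0max)
  moreover have "s \<le> t'" using t'(1) by simp
  ultimately show False using s(1) by linarith
qed



lemma countable_discrete_real:
  fixes S :: "real set"
  assumes "\<And>t. t \<in> S \<Longrightarrow> \<exists>e>0. \<forall>s\<in>S. s \<noteq> t \<longrightarrow> e \<le> \<bar>s - t\<bar>"
  shows "countable S"
proof -
  define e where "e t = (SOME e. e > 0 \<and> (\<forall>s\<in>S. s \<noteq> t \<longrightarrow> e \<le> \<bar>s - t\<bar>))" for t
  have e: "e t > 0 \<and> (\<forall>s\<in>S. s \<noteq> t \<longrightarrow> e t \<le> \<bar>s - t\<bar>)" if "t \<in> S" for t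
    unfolding e_def using assms[OF that] by (rule someI_ex)
  have ex: "\<exists>q. q \<in> \<rat> \<and> t < q \<and> q < t + e t / 2" if "t \<in> S" for t
  proof -
    have "e t > 0" using e[OF that] by blast
    then obtain r where "r \<in> \<rat>" "t < r" "r < t + e t / 2" using Rats_dense_in_real[of t "t + e t / 2"] by force
    then show ?thesis by blast
  qed
  define q where "q t = (SOME r. r \<in> \<rat> \<and> t < r \<and> r < t + e t / 2)" for t
  have q: "q t \<in> \<rat> \<and> t < q t \<and> q t < t + e t / 2" if "t \<in> S" for t
    unfolding q_def by (rule someI_ex[OF ex[OF that]])
  have inj: "inj_on q S"
  proof (rule inj_onI)
    fix s t assume st: "s \<in> S" "t \<in> S" "q s = q t"
    show "s = t"
    proof (rule ccontr)
      assume ne: "s \<noteq> t"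
      have h3a: "e t \<le> \<bar>s - t\<bar>" using e[OF st(2)] st(1) ne by blast
      have h3b: "e s \<le> \<bar>t - s\<bar>" using e[OF st(1)] st(2) ne[symmetric] by blast
      have h3c: "e s \<le> \<bar>s - t\<bar>" using h3b by (simp add: abs_minus_commute)
      have h3d: "e t > 0" "e s > 0" using e[OF st(1)] e[OF st(2)] by blast+
      note h3 = h3a h3c h3d
      have h1: "s - t < e t / 2" "t - s < e s / 2" using q[OF st(1)] q[OF st(2)] st(3) by linarith+
      show False using h1 h3 by linarith
    qed
  qed
  have "q ` S \<subseteq> \<rat>" using q by blast
  then have "countable (q ` S)" using countable_rat by (rule countable_subset)
  then show ?thesis using inj by (rule countable_image_inj_on)
qed




lemma deriv_nonzero_isolated:
  fixes h :: "real \<Rightarrow> real"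
  assumes "(h has_real_derivative D) (at t within X)" "D \<noteq> 0" "h t = 0"
  shows "\<exists>e>0. \<forall>s\<in>X. s \<noteq> t \<longrightarrow> dist s t < e \<longrightarrow> h s \<noteq> 0"
proof -
  have "((\<lambda>y. (h y - h t) / (y - t)) \<longlongrightarrow> D) (at t within X)"
    using assms(1) by (simp add: has_field_derivative_iff)
  then have "eventually (\<lambda>y. (h y - h t) / (y - t) \<noteq> 0) (at t within X)"
    using assms(2) by (rule tendsto_imp_eventually_ne)
  then obtain e where e: "e > 0" and P: "\<And>y. y \<in> X \<Longrightarrow> y \<noteq> t \<Longrightarrow> dist y t < e \<Longrightarrow> (h y - h t) / (y - t) \<noteq> 0"
    unfolding eventually_at by blast
  show ?thesis
  proof (intro exI[of _ e] conjI ballI impI)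
    fix s assume "s \<in> X" "s \<noteq> t" "dist s t < e"
    then have "(h s - h t) / (s - t) \<noteq> 0" by (rule P)
    then show "h s \<noteq> 0" using assms(3) by auto
  qed (rule e)
qed

lemma relu_deriv:
  fixes h :: "real \<Rightarrow> real"
  assumes hd: "(h has_real_derivative D) (at t within X)" and nb: "\<not> (h t = 0 \<and> D \<noteq> 0)"
  shows "((\<lambda>s. relu (h s)) has_real_derivative (ind (h t \<ge> 0) * D)) (at t within X)"
proof -
  have cont: "continuous (at t within X) h"
    using hd by (rule DERIV_continuous)
  then have lim: "(h \<longlongrightarrow> h t) (at t within X)" by (simp add: continuous_within)
  consider "h t > 0" | "h t < 0" | "h t = 0 \<and> D = 0" using nb by linarith
  then show ?thesis
  proof cases
    case 1
    then have ev: "eventually (\<lambda>s. h s > 0) (at t within X)"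
      using lim by (simp add: order_tendsto_iff)
    have "eventually (\<lambda>s. relu (h s) = h s) (at t within X)"
      using ev by eventually_elim (simp add: relu_def)
    then have "((\<lambda>s. relu (h s)) has_real_derivative D) (at t within X) = (h has_real_derivative D) (at t within X)"
      using 1 by (intro has_field_derivative_cong_eventually) (auto simp: relu_def)
    then show ?thesis using hd 1 by (simp add: ind_def)
  next
    case 2
    then have ev: "eventually (\<lambda>s. h s < 0) (at t within X)"
      using lim by (simp add: order_tendsto_iff)
    have "eventually (\<lambda>s. relu (h s) = 0) (at t within X)"
      using ev by eventually_elim (simp add: relu_def)
    then have "((\<lambda>s. relu (h s)) has_real_derivative 0) (at t within X) = ((\<lambda>s. 0) has_real_derivative 0) (at t within X)"
      using 2 by (intro has_field_derivative_cong_eventually) (auto simp: relu_def)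
    then show ?thesis using 2 by (simp add: ind_def)
  next
    case 3
    have q: "((\<lambda>y. (h y - h t) / (y - t)) \<longlongrightarrow> 0) (at t within X)"
      using hd 3 by (simp add: has_field_derivative_iff)
    have "((\<lambda>y. (relu (h y) - relu (h t)) / (y - t)) \<longlongrightarrow> 0) (at t within X)"
    proof (rule Lim_null_comparison[OF _ q[THEN tendsto_norm_zero]])
      show "\<forall>\<^sub>F y in at t within X. norm ((relu (h y) - relu (h t)) / (y - t)) \<le> norm ((h y - h t) / (y - t))"
        using 3 by (intro always_eventually allI) (auto simp: relu_def abs_divide divide_right_mono)
    qed
    then show ?thesis using 3 by (simp add: has_field_derivative_iff)
  qed
qed




definition quad :: "nat \<Rightarrow> (nat \<Rightarrow> nat \<Rightarrow> real) \<Rightarrow> (nat \<Rightarrow> real) \<Rightarrow> real" where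
  "quad n A u = (\<Sum>i<n. \<Sum>j<n. u i * A i j * u j)"
definition nsq :: "nat \<Rightarrow> (nat \<Rightarrow> real) \<Rightarrow> real" where
  "nsq n u = (\<Sum>i<n. (u i)^2)"
definition mv :: "nat \<Rightarrow> (nat \<Rightarrow> nat \<Rightarrow> real) \<Rightarrow> (nat \<Rightarrow> real) \<Rightarrow> nat \<Rightarrow> real" where
  "mv n A u = (\<lambda>i. \<Sum>j<n. A i j * u j)"
definition frob :: "nat \<Rightarrow> (nat \<Rightarrow> nat \<Rightarrow> real) \<Rightarrow> real" where
  "frob n A = (\<Sum>i<n. \<Sum>j<n. (A i j)^2)"

lemma nsq_nonneg: "nsq n u \<ge> 0"
  unfolding nsq_def by (intro sum_nonneg) simp

lemma frob_nonneg: "frob n u \<ge> 0"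
  unfolding frob_def by (intro sum_nonneg) simp

lemma quad_as_mv: "quad n A u = (\<Sum>i<n. u i * mv n A u i)"
  unfolding quad_def mv_def by (simp add: sum_distrib_left mult.assoc)

lemma matrix_bound: "nsq n (mv n B u) \<le> frob n B * nsq n u"
proof -
  have "nsq n (mv n B u) = (\<Sum>i<n. (\<Sum>j<n. B i j * u j)^2)" by (simp add: nsq_def mv_def)
  also have "\<dots> \<le> (\<Sum>i<n. (\<Sum>j<n. (B i j)^2) * (\<Sum>j<n. (u j)^2))"
    by (intro sum_mono Cauchy_Schwarz_ineq_sum)
  also have "\<dots> = frob n B * nsq n u" by (simp add: frob_def nsq_def sum_distrib_right)
  finally show ?thesis .
qed

lemma sq_le_nsq: "i < n \<Longrightarrow> (u i)^2 \<le> nsq n u"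
  unfolding nsq_def by (rule member_le_sum) auto

lemma quad_abs_bound: "\<bar>quad n A u\<bar> \<le> (\<Sum>i<n. \<Sum>j<n. \<bar>A i j\<bar>) * nsq n u"
proof -
  have b: "\<bar>u i * A i j * u j\<bar> \<le> \<bar>A i j\<bar> * nsq n u" if "i < n" "j < n" for i j
  proof -
    have "2 * \<bar>u i * u j\<bar> \<le> (u i)^2 + (u j)^2"
      using sum_squares_bound[of "\<bar>u i\<bar>" "\<bar>u j\<bar>"] by (simp add: abs_mult power2_eq_square)
    also have "\<dots> \<le> 2 * nsq n u" using sq_le_nsq[of i n u] sq_le_nsq[of j n u] that by simp
    finally have "\<bar>u i * u j\<bar> \<le> nsq n u" by simp
    then have "\<bar>A i j\<bar> * \<bar>u i * u j\<bar> \<le> \<bar>A i j\<bar> * nsq n u" by (intro mult_left_mono) auto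
    then show ?thesis by (simp add: abs_mult mult_ac)
  qed
  have "\<bar>quad n A u\<bar> \<le> (\<Sum>i<n. \<Sum>j<n. \<bar>u i * A i j * u j\<bar>)"
    unfolding quad_def by (rule order_trans[OF sum_abs sum_mono]) (rule sum_abs)
  also have "\<dots> \<le> (\<Sum>i<n. \<Sum>j<n. \<bar>A i j\<bar> * nsq n u)"
    using b by (intro sum_mono) auto
  also have "\<dots> = (\<Sum>i<n. \<Sum>j<n. \<bar>A i j\<bar>) * nsq n u" by (simp add: sum_distrib_right)
  finally show ?thesis .
qed

lemma quad_scale: "quad n A (\<lambda>i. c * u i) = c^2 * quad n A u"
  unfolding quad_def by (simp add: sum_distrib_left power2_eq_square mult_ac)

lemma nsq_scale: "nsq n (\<lambda>i. c * u i) = c^2 * nsq n u"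
  unfolding nsq_def by (simp add: sum_distrib_left power_mult_distrib)

lemma nsq_zero: "nsq n u = 0 \<Longrightarrow> i < n \<Longrightarrow> u i = 0"
  using sq_le_nsq[of i n u] by simp

lemma quad_zero: "nsq n u = 0 \<Longrightarrow> quad n A u = 0"
  unfolding quad_def using nsq_zero[of n u] by (intro sum.neutral ballI) simp

lemma quad_diff_sym:
  assumes sym: "\<And>i j. i < n \<Longrightarrow> j < n \<Longrightarrow> A i j = A j i"
  shows "quad n A (\<lambda>i. u i - s * z i) = quad n A u - 2 * s * (\<Sum>i<n. z i * mv n A u i) + s^2 * quad n A z"
proof -
  have x: "(\<Sum>i<n. \<Sum>j<n. u i * A i j * z j) = (\<Sum>i<n. z i * mv n A u i)"
  proof -
    have "(\<Sum>i<n. \<Sum>j<n. u i * A i j * z j) = (\<Sum>j<n. \<Sum>i<n. u i * A i j * z j)" by (rule sum.swap)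
    also have "\<dots> = (\<Sum>j<n. \<Sum>i<n. z j * (A j i * u i))"
      by (intro sum.cong refl) (simp add: sym mult_ac)
    also have "\<dots> = (\<Sum>i<n. z i * mv n A u i)" by (simp add: mv_def sum_distrib_left)
    finally show ?thesis .
  qed
  have y: "(\<Sum>i<n. \<Sum>j<n. z i * A i j * u j) = (\<Sum>i<n. z i * mv n A u i)"
    by (simp add: mv_def sum_distrib_left mult_ac)
  have "quad n A (\<lambda>i. u i - s * z i) = (\<Sum>i<n. \<Sum>j<n. u i * A i j * u j - s * (u i * A i j * z j) - s * (z i * A i j * u j) + s^2 * (z i * A i j * z j))"
    unfolding quad_def by (intro sum.cong refl) (simp add: algebra_simps power2_eq_square)
  also have "\<dots> = quad n A u - s * (\<Sum>i<n. \<Sum>j<n. u i * A i j * z j) - s * (\<Sum>i<n. \<Sum>j<n. z i * A i j * u j) + s^2 * quad n A z"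
    unfolding quad_def by (simp add: sum.distrib sum_subtractf sum_distrib_left)
  also have "\<dots> = quad n A u - 2 * s * (\<Sum>i<n. z i * mv n A u i) + s^2 * quad n A z"
    unfolding x y by simp
  finally show ?thesis .
qed

lemma psd_bound:
  assumes sym: "\<And>i j. i < n \<Longrightarrow> j < n \<Longrightarrow> A i j = A j i"
    and psd: "\<And>w. quad n A w \<ge> 0"
  shows "nsq n (mv n A u) \<le> ((\<Sum>i<n. \<Sum>j<n. \<bar>A i j\<bar>) + 1) * quad n A u"
proof -
  define K where "K = (\<Sum>i<n. \<Sum>j<n. \<bar>A i j\<bar>) + 1"
  have K0: "K > 0" unfolding K_def by (smt (verit) sum_nonneg abs_ge_zero)
  define z where "z = mv n A u"
  have qz: "quad n A z \<le> K * nsq n z"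
  proof -
    have "quad n A z \<le> (\<Sum>i<n. \<Sum>j<n. \<bar>A i j\<bar>) * nsq n z" using quad_abs_bound[of n A z] by linarith
    also have "\<dots> \<le> K * nsq n z" unfolding K_def using nsq_nonneg[of n z] by (simp add: distrib_right)
    finally show ?thesis .
  qed
  have zz: "(\<Sum>i<n. z i * mv n A u i) = nsq n z" by (simp add: z_def nsq_def power2_eq_square)
  have "0 \<le> quad n A (\<lambda>i. u i - (1/K) * z i)" by (rule psd)
  also have "\<dots> = quad n A u - 2 * (1/K) * nsq n z + (1/K)^2 * quad n A z"
    using quad_diff_sym[OF sym, where u=u and s="1/K" and z=z] zz by simp
  also have "\<dots> \<le> quad n A u - 2 * (1/K) * nsq n z + (1/K)^2 * (K * nsq n z)"
    using qz by (intro add_left_mono mult_left_mono) auto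
  also have "\<dots> = quad n A u - (1/K) * nsq n z" using K0 by (simp add: power2_eq_square field_simps)
  finally have "(1/K) * nsq n z \<le> quad n A u" by simp
  then have "nsq n z \<le> K * quad n A u" using K0 by (simp add: field_simps)
  then show ?thesis by (simp add: K_def z_def)
qed

lemma mat_vec_sum:
  assumes "A \<in> carrier_mat n n" "v \<in> carrier_vec n" "i < n"
  shows "(A *\<^sub>v v) $ i = (\<Sum>j<n. A $$ (i,j) * v $ j)"
  using assms by (simp add: scalar_prod_def lessThan_atLeast0)

lemma eig_finite: "finite {e. is_eigenvalue n A e}"
proof -
  define Am where "Am = mat n n (\<lambda>(i,j). A i j)"
  have Am: "Am \<in> carrier_mat n n" by (simp add: Am_def)
  have "{e. is_eigenvalue n A e} \<subseteq> {e. poly (char_poly Am) e = 0}"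
  proof
    fix e assume "e \<in> {e. is_eigenvalue n A e}"
    then obtain u where u: "\<exists>i<n. u i \<noteq> 0" "\<forall>i<n. (\<Sum>j<n. A i j * u j) = e * u i"
      by (auto simp: is_eigenvalue_def)
    define v where "v = vec n u"
    have vc: "v \<in> carrier_vec n" by (simp add: v_def)
    have v0: "v \<noteq> 0\<^sub>v n"
    proof
      assume "v = 0\<^sub>v n"
      then have "\<forall>i<n. u i = 0" by (metis index_vec index_zero_vec(1) v_def)
      then show False using u(1) by blast
    qed
    have "Am *\<^sub>v v = e \<cdot>\<^sub>v v"
    proof (rule eq_vecI)
      fix i assume "i < dim_vec (e \<cdot>\<^sub>v v)"
      then have i: "i < n" by (simp add: v_def)
      have "(Am *\<^sub>v v) $ i = (\<Sum>j<n. A i j * u j)"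
        using mat_vec_sum[OF Am vc i] i by (simp add: Am_def v_def)
      also have "\<dots> = e * u i" using u(2) i by blast
      finally show "(Am *\<^sub>v v) $ i = (e \<cdot>\<^sub>v v) $ i" using i by (simp add: v_def)
    qed (simp add: Am_def v_def)
    then have "eigenvalue Am e" using vc v0 Am unfolding eigenvalue_def eigenvector_def by auto
    then show "e \<in> {e. poly (char_poly Am) e = 0}" using eigenvalue_root_char_poly[OF Am] by simp
  qed
  moreover have "char_poly Am \<noteq> 0"
    using degree_monic_char_poly[OF Am] by auto
  then have "finite {e. poly (char_poly Am) e = 0}" by (rule poly_roots_finite)
  ultimately show ?thesis by (rule finite_subset)
qed

lemma rayleigh:
  assumes sym: "\<And>i j. i < n \<Longrightarrow> j < n \<Longrightarrow> A i j = A j i"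
    and lam: "lm \<le> lambda_min n A"
  shows "lm * nsq n u \<le> quad n A u"
proof (cases "n = 0")
  case True
  then show ?thesis by (simp add: nsq_def quad_def)
next
  case False
  define K where "K = (\<Sum>i<n. \<Sum>j<n. \<bar>A i j\<bar>)"
  define R where "R = {quad n A w | w. nsq n w = 1}"
  define e0 where "e0 = (\<lambda>i::nat. if i = 0 then 1 else (0::real))"
  have "nsq n e0 = (\<Sum>i<n. if i = 0 then 1 else 0)" unfolding nsq_def e0_def by (intro sum.cong) auto
  also have "\<dots> = 1" using False by (simp add: sum.delta)
  finally have "nsq n e0 = 1" .
  then have Rne: "R \<noteq> {}" by (auto simp: R_def)
  have Rbd: "bdd_below R"
  proof (rule bdd_belowI)
    fix r assume "r \<in> R"
    then obtain w where w: "r = quad n A w" "nsq n w = 1" by (auto simp: R_def)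
    then show "- K \<le> r" using quad_abs_bound[of n A w] by (simp add: K_def)
  qed
  define \<mu> where "\<mu> = Inf R"
  have low: "\<mu> * nsq n w \<le> quad n A w" for w
  proof (cases "nsq n w = 0")
    case True
    then show ?thesis by (simp add: quad_zero)
  next
    case False
    then have pos: "nsq n w > 0" using nsq_nonneg[of n w] by linarith
    define c where "c = 1 / sqrt (nsq n w)"
    have c2: "c^2 = 1 / nsq n w" using pos by (simp add: c_def power_divide)
    have "nsq n (\<lambda>i. c * w i) = 1" using pos by (simp add: nsq_scale c2)
    then have "quad n A (\<lambda>i. c * w i) \<in> R" by (auto simp: R_def)
    then have "\<mu> \<le> quad n A (\<lambda>i. c * w i)" unfolding \<mu>_def using Rbd by (rule cInf_lower)
    then have "\<mu> \<le> quad n A w / nsq n w" by (simp add: quad_scale c2)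
    then show ?thesis using pos by (simp add: field_simps)
  qed
  define Nf where "Nf = (\<lambda>i j. A i j - (if i = j then \<mu> else 0))"
  have symN: "\<And>i j. i < n \<Longrightarrow> j < n \<Longrightarrow> Nf i j = Nf j i" using sym by (simp add: Nf_def)
  have quadN: "quad n Nf w = quad n A w - \<mu> * nsq n w" for w
  proof -
    have "quad n Nf w = (\<Sum>i<n. \<Sum>j<n. w i * A i j * w j - (if i = j then \<mu> * (w i)^2 else 0))"
      unfolding quad_def Nf_def by (intro sum.cong refl) (auto simp: algebra_simps power2_eq_square)
    also have "\<dots> = quad n A w - \<mu> * nsq n w"
      by (simp add: quad_def nsq_def sum_subtractf sum_distrib_left sum.delta)
    finally show ?thesis .
  qed
  have psdN: "quad n Nf w \<ge> 0" for w using low[of w] quadN[of w] by simp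
  define Nm where "Nm = mat n n (\<lambda>(i,j). Nf i j)"
  have Nm: "Nm \<in> carrier_mat n n" by (simp add: Nm_def)
  have detN: "det Nm = 0"
  proof (rule ccontr)
    assume "det Nm \<noteq> 0"
    from det_non_zero_imp_unit[OF Nm this, of "()"]
    obtain B where B: "B \<in> carrier_mat n n" "B * Nm = 1\<^sub>m n"
      unfolding Units_def ring_mat_def by auto
    define Bf where "Bf = (\<lambda>i j. B $$ (i,j))"
    define K' where "K' = (\<Sum>i<n. \<Sum>j<n. \<bar>Nf i j\<bar>) + 1"
    define C where "C = frob n Bf * K' + 1"
    have K'0: "K' > 0" unfolding K'_def by (smt (verit) sum_nonneg abs_ge_zero)
    have C0: "C > 0" unfolding C_def using frob_nonneg[of n Bf] K'0 by (smt (verit) mult_nonneg_nonneg)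
    have key: "nsq n w \<le> C * quad n Nf w" for w
    proof -
      define v where "v = vec n w"
      have vc: "v \<in> carrier_vec n" by (simp add: v_def)
      have "v = (B * Nm) *\<^sub>v v" using B(2) vc by simp
      also have "\<dots> = B *\<^sub>v (Nm *\<^sub>v v)" using B(1) Nm vc by (rule assoc_mult_mat_vec)
      finally have veq: "v = B *\<^sub>v (Nm *\<^sub>v v)" .
      have Nv: "(Nm *\<^sub>v v) $ j = mv n Nf w j" if "j < n" for j
        using mat_vec_sum[OF Nm vc that] that by (simp add: Nm_def v_def mv_def)
      have wi: "w i = mv n Bf (mv n Nf w) i" if "i < n" for i
      proof -
        have "w i = v $ i" using that by (simp add: v_def)
        also have "\<dots> = (B *\<^sub>v (Nm *\<^sub>v v)) $ i" using veq by simp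
        also have "\<dots> = (\<Sum>j<n. B $$ (i,j) * (Nm *\<^sub>v v) $ j)"
          by (rule mat_vec_sum[OF B(1) mult_mat_vec_carrier[OF Nm vc] that])
        also have "\<dots> = mv n Bf (mv n Nf w) i" using Nv by (simp add: mv_def Bf_def)
        finally show ?thesis .
      qed
      have "nsq n w = nsq n (mv n Bf (mv n Nf w))" unfolding nsq_def using wi by simp
      also have "\<dots> \<le> frob n Bf * nsq n (mv n Nf w)" by (rule matrix_bound)
      also have "\<dots> \<le> frob n Bf * (K' * quad n Nf w)"
        using psd_bound[OF symN psdN, of w] frob_nonneg[of n Bf] by (simp add: K'_def mult_left_mono)
      also have "\<dots> \<le> C * quad n Nf w" using psdN[of w] by (simp add: C_def distrib_right)
      finally show ?thesis .
    qed
    have "\<mu> + 1 / C \<le> \<mu>" unfolding \<mu>_def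
    proof (rule cInf_greatest[OF Rne])
      fix r assume "r \<in> R"
      then obtain w where w: "r = quad n A w" "nsq n w = 1" by (auto simp: R_def)
      have "1 \<le> C * (quad n A w - Inf R)" using key[of w] quadN[of w] w(2) by (simp add: \<mu>_def)
      then have "1 / C \<le> quad n A w - Inf R" using C0 by (simp add: field_simps)
      then show "Inf R + 1 / C \<le> r" using w(1) by simp
    qed
    then show False using C0 by simp
  qed
  obtain v where v: "v \<in> carrier_vec n" "v \<noteq> 0\<^sub>v n" "Nm *\<^sub>v v = 0\<^sub>v n"
    using det_0_iff_vec_prod_zero[OF Nm] detN by auto
  define u0 where "u0 = (\<lambda>i. v $ i)"
  have "\<exists>i<n. u0 i \<noteq> 0"
  proof (rule ccontr)
    assume "\<not> (\<exists>i<n. u0 i \<noteq> 0)"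
    then have "v = 0\<^sub>v n" using v(1) by (intro eq_vecI) (auto simp: u0_def)
    then show False using v(2) by simp
  qed
  moreover have "\<forall>i<n. (\<Sum>j<n. A i j * u0 j) = \<mu> * u0 i"
  proof (intro allI impI)
    fix i assume i: "i < n"
    have "0 = (Nm *\<^sub>v v) $ i" using v(3) i by simp
    also have "\<dots> = (\<Sum>j<n. Nm $$ (i,j) * v $ j)" by (rule mat_vec_sum[OF Nm v(1) i])
    also have "\<dots> = (\<Sum>j<n. Nf i j * u0 j)" using i by (intro sum.cong) (auto simp: Nm_def u0_def)
    also have "\<dots> = (\<Sum>j<n. A i j * u0 j - (if i = j then \<mu> * u0 j else 0))"
      by (intro sum.cong) (auto simp: Nf_def algebra_simps)
    also have "\<dots> = (\<Sum>j<n. A i j * u0 j) - \<mu> * u0 i"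
      using i by (simp add: sum_subtractf sum.delta)
    finally show "(\<Sum>j<n. A i j * u0 j) = \<mu> * u0 i" by simp
  qed
  ultimately have "is_eigenvalue n A \<mu>" unfolding is_eigenvalue_def by blast
  then have "lambda_min n A \<le> \<mu>" unfolding lambda_min_def using eig_finite[of n A] by (intro Min_le) auto
  then have "lm * nsq n u \<le> \<mu> * nsq n u" using lam nsq_nonneg[of n u] by (intro mult_right_mono) auto
  also have "\<dots> \<le> quad n A u" by (rule low)
  finally show ?thesis .
qed




lemma normal_interval_bound:
  assumes a: "\<alpha> > 0" and r: "r \<ge> 0"
  shows "measure (density lborel (normal_density 0 \<alpha>)) {-(\<alpha>*r)<..<\<alpha>*r} \<le> r"
proof -
  define N where "N = density lborel (\<lambda>x. ennreal (normal_density 0 \<alpha> x))"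
  define I where "I = {-(\<alpha>*r)<..<\<alpha>*r}"
  define c where "c = 1 / (\<alpha> * sqrt (2 * pi))"
  have c0: "c \<ge> 0" using a by (simp add: c_def)
  have dens: "normal_density 0 \<alpha> x \<le> c" for x
  proof -
    have "sqrt (2 * pi * \<alpha>^2) = \<alpha> * sqrt (2 * pi)" using a by (simp add: real_sqrt_mult)
    moreover have "exp (- (x - 0)\<^sup>2 / (2 * \<alpha>\<^sup>2)) \<le> 1" by simp
    ultimately have "normal_density 0 \<alpha> x = exp (- (x - 0)\<^sup>2 / (2 * \<alpha>\<^sup>2)) / (\<alpha> * sqrt (2 * pi))"
      unfolding normal_density_def by simp
    also have "\<dots> \<le> 1 / (\<alpha> * sqrt (2 * pi))"
      using a by (intro divide_right_mono) auto
    finally show ?thesis by (simp add: c_def)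
  qed
  have "emeasure N I = (\<integral>\<^sup>+ x. ennreal (normal_density 0 \<alpha> x) * indicator I x \<partial>lborel)"
    unfolding N_def by (subst emeasure_density) (auto simp: I_def)
  also have "\<dots> \<le> (\<integral>\<^sup>+ x. ennreal c * indicator I x \<partial>lborel)"
    by (intro nn_integral_mono mult_right_mono ennreal_leI dens) auto
  also have "\<dots> = ennreal c * emeasure lborel I"
    by (subst nn_integral_cmult_indicator) (auto simp: I_def)
  also have "\<dots> = ennreal (c * (2 * (\<alpha> * r)))"
    using a r c0 by (simp add: I_def ennreal_mult)
  finally have e: "emeasure N I \<le> ennreal (c * (2 * (\<alpha> * r)))" .
  have "c * (2 * (\<alpha> * r)) = r * (2 / sqrt (2 * pi))" using a by (simp add: c_def field_simps)
  also have "\<dots> \<le> r * 1"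
  proof (intro mult_left_mono r)
    have "2 \<le> sqrt (2 * pi)" using pi_gt3 by (simp add: real_le_rsqrt)
    then show "2 / sqrt (2 * pi) \<le> 1" by simp
  qed
  finally have "c * (2 * (\<alpha> * r)) \<le> r" by simp
  then have "emeasure N I \<le> ennreal r" using e by (meson ennreal_leI order_trans)
  then have "measure N I \<le> r" using r by (simp add: measure_def enn2real_leI)
  then show ?thesis unfolding N_def I_def .
qed

lemma prob_part:
  assumes a: "\<alpha> > 0" and r: "r \<ge> 0" and m: "m \<ge> 1"
  shows "\<exists>E \<in> sets (init_measure m d \<alpha>). measure (init_measure m d \<alpha>) E \<ge> 1 - real m * r ^ d \<and>
     (\<forall>(V, c) \<in> E. (\<forall>k<m. c k \<in> {-1, 1}) \<and> (\<forall>k<m. \<exists>j<d. \<alpha> * r \<le> \<bar>V k j\<bar>))"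
proof -
  define N where "N = density lborel (\<lambda>x. ennreal (normal_density 0 \<alpha> x))"
  define Mi where "Mi = PiM {..<d} (\<lambda>_. N)"
  define M1 where "M1 = PiM {..<m} (\<lambda>_. Mi)"
  define P where "P = measure_pmf (pmf_of_set {-1, 1::real})"
  define M2 where "M2 = PiM {..<m} (\<lambda>_. P)"
  have im: "init_measure m d \<alpha> = M1 \<Otimes>\<^sub>M M2"
    unfolding init_measure_def M1_def Mi_def N_def M2_def P_def ..
  have pN: "prob_space N" unfolding N_def using a by (rule prob_space_normal_density)
  have pMi: "prob_space Mi" unfolding Mi_def using pN by (intro prob_space_PiM)
  have pM1: "prob_space M1" unfolding M1_def using pMi by (intro prob_space_PiM)
  have pP: "prob_space P" unfolding P_def by (rule prob_space_measure_pmf)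
  have pM2: "prob_space M2" unfolding M2_def using pP by (intro prob_space_PiM)
  have psfN: "product_sigma_finite (\<lambda>_. N)" unfolding product_sigma_finite_def
    using prob_space_imp_sigma_finite[OF pN] by simp
  have psfP: "product_sigma_finite (\<lambda>_. P)" unfolding product_sigma_finite_def
    using prob_space_imp_sigma_finite[OF pP] by simp
  define I where "I = {-(\<alpha>*r)<..<\<alpha>*r}"
  define Bx where "Bx = PiE {..<d} (\<lambda>_. I)"
  define D where "D k = {V \<in> space M1. V k \<in> Bx}" for k
  define A where "A = space M1 - (\<Union>k<m. D k)"
  define C where "C = PiE {..<m} (\<lambda>_. {-1, 1::real})"
  have IN: "I \<in> sets N" by (simp add: N_def I_def)
  have Bx: "Bx \<in> sets Mi" unfolding Bx_def Mi_def using IN by (intro sets_PiM_I_finite) auto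
  have mI: "measure N I \<le> r" using normal_interval_bound[OF a r] by (simp add: N_def I_def)
  have mBx: "measure Mi Bx \<le> r ^ d"
  proof -
    have "emeasure Mi Bx = (\<Prod>j<d. emeasure N I)"
      unfolding Mi_def Bx_def
      by (rule product_sigma_finite.emeasure_PiM[OF psfN]) (auto simp: IN)
    also have "\<dots> = ennreal (measure N I ^ d)"
      using finite_measure.emeasure_eq_measure[OF prob_space.finite_measure[OF pN]] by (simp add: ennreal_power)
    finally have "measure Mi Bx = measure N I ^ d" by (simp add: measure_def)
    also have "\<dots> \<le> r ^ d" using mI by (intro power_mono) auto
    finally show ?thesis .
  qed
  have DM: "D k \<in> sets M1" if "k < m" for k
  proof -
    have "(\<lambda>V. V k) \<in> measurable M1 Mi" unfolding M1_def using that by (intro measurable_component_singleton) auto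
    then have "(\<lambda>V. V k) -` Bx \<inter> space M1 \<in> sets M1" using Bx by (rule measurable_sets)
    moreover have "D k = (\<lambda>V. V k) -` Bx \<inter> space M1" unfolding D_def by blast
    ultimately show ?thesis by simp
  qed
  have mD: "measure M1 (D k) \<le> r ^ d" if "k < m" for k
  proof -
    have "emeasure M1 (D k) = emeasure Mi Bx"
      unfolding D_def M1_def using that Bx
      by (intro product_prob_space.emeasure_PiM_Collect_single product_prob_spaceI pMi) auto
    then have "measure M1 (D k) = measure Mi Bx" by (simp add: measure_def)
    then show ?thesis using mBx by simp
  qed
  have UD: "(\<Union>k<m. D k) \<in> sets M1" using DM by auto
  have "measure M1 (\<Union>k<m. D k) \<le> (\<Sum>k<m. measure M1 (D k))"
    using DM by (intro finite_measure.finite_measure_subadditive_finite prob_space.finite_measure pM1) auto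
  also have "\<dots> \<le> (\<Sum>k<m. r ^ d)" using mD by (intro sum_mono) auto
  also have "\<dots> = real m * r ^ d" by simp
  finally have mU: "measure M1 (\<Union>k<m. D k) \<le> real m * r ^ d" .
  have AM: "A \<in> sets M1" unfolding A_def using UD by auto
  have mA: "measure M1 A \<ge> 1 - real m * r ^ d"
    unfolding A_def using prob_space.prob_compl[OF pM1 UD] mU by simp
  have CM: "C \<in> sets M2" unfolding C_def M2_def P_def by (intro sets_PiM_I_finite) auto
  have mC: "measure M2 C = 1"
  proof -
    have "emeasure M2 C = (\<Prod>k<m. emeasure P {-1, 1})"
      unfolding M2_def C_def
      by (rule product_sigma_finite.emeasure_PiM[OF psfP]) (auto simp: P_def)
    also have "\<dots> = 1" unfolding P_def by (subst emeasure_pmf_of_set_space) auto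
    finally show ?thesis by (simp add: measure_def)
  qed
  define E where "E = A \<times> C"
  have EM: "E \<in> sets (init_measure m d \<alpha>)" unfolding E_def im using AM CM by (rule pair_measureI)
  have "emeasure (M1 \<Otimes>\<^sub>M M2) E = emeasure M1 A * emeasure M2 C"
    unfolding E_def
    by (intro sigma_finite_measure.emeasure_pair_measure_Times AM CM prob_space_imp_sigma_finite pM2)
  then have "measure (M1 \<Otimes>\<^sub>M M2) E = measure M1 A * measure M2 C"
    by (simp add: measure_def enn2real_mult)
  then have mE: "measure (init_measure m d \<alpha>) E \<ge> 1 - real m * r ^ d" using mA mC im by simp
  have propE: "(\<forall>k<m. c k \<in> {-1, 1}) \<and> (\<forall>k<m. \<exists>j<d. \<alpha> * r \<le> \<bar>V k j\<bar>)" if "(V, c) \<in> E" for V c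
  proof
    show "\<forall>k<m. c k \<in> {-1, 1}" using that by (auto simp: E_def C_def PiE_def Pi_def)
    show "\<forall>k<m. \<exists>j<d. \<alpha> * r \<le> \<bar>V k j\<bar>"
    proof (intro allI impI)
      fix k assume k: "k < m"
      have V: "V \<in> space M1" "V \<notin> D k" using that k by (auto simp: E_def A_def)
      have "V k \<in> space Mi" using V(1) k unfolding M1_def by (auto simp: space_PiM PiE_def Pi_def)
      then have ext: "V k \<in> extensional {..<d}" unfolding Mi_def by (simp add: space_PiM PiE_def)
      have "V k \<notin> Bx" using V by (auto simp: D_def)
      then have "\<not> (\<forall>j<d. V k j \<in> I)" using ext by (auto simp: Bx_def PiE_def Pi_def)
      then obtain j where "j < d" "V k j \<notin> I" by auto
      then show "\<exists>j<d. \<alpha> * r \<le> \<bar>V k j\<bar>" by (auto simp: I_def abs_if)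
    qed
  qed
  show ?thesis using EM mE propE by blast
qed




lemma vnorm_sq: "(vnorm d u)^2 = (\<Sum>j<d. (u j)^2)"
proof -
  have "0 \<le> (\<Sum>j<d. (u j)^2)" by (rule sum_nonneg) simp
  then show ?thesis unfolding vnorm_def by (rule real_sqrt_pow2)
qed

lemma vnorm_nonneg: "vnorm d u \<ge> 0"
proof -
  have "0 \<le> (\<Sum>j<d. (u j)^2)" by (rule sum_nonneg) simp
  then show ?thesis unfolding vnorm_def by (rule real_sqrt_ge_zero)
qed

lemma coord_le_vnorm: "j < d \<Longrightarrow> \<bar>u j\<bar> \<le> vnorm d u"
proof -
  assume j: "j < d"
  have "(u j)^2 \<le> (\<Sum>j<d. (u j)^2)" using j by (intro member_le_sum) auto
  then have "sqrt ((u j)^2) \<le> vnorm d u" unfolding vnorm_def by (rule real_sqrt_le_mono)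
  then show ?thesis by simp
qed

lemma dotp_cs: "\<bar>dotp d a b\<bar> \<le> vnorm d a * vnorm d b"
proof -
  have "(dotp d a b)^2 \<le> (\<Sum>j<d. (a j)^2) * (\<Sum>j<d. (b j)^2)"
    unfolding dotp_def by (rule Cauchy_Schwarz_ineq_sum)
  also have "\<dots> = (vnorm d a * vnorm d b)^2" by (simp add: power_mult_distrib vnorm_sq)
  finally have "(dotp d a b)^2 \<le> (vnorm d a * vnorm d b)^2" .
  then have "\<bar>dotp d a b\<bar> \<le> \<bar>vnorm d a * vnorm d b\<bar>" by (simp only: abs_le_square_iff)
  then show ?thesis using vnorm_nonneg[of d a] vnorm_nonneg[of d b] by simp
qed

lemma dotp_comm: "dotp d a b = dotp d b a"
  unfolding dotp_def by (simp add: mult.commute)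

lemma dotp_self: "dotp d u u = (vnorm d u)^2"
  using vnorm_sq[of d u] by (simp add: dotp_def power2_eq_square)

lemma dotp_perp_self: "dotp d u (perp d u w) = 0"
proof (cases "vnorm d u = 0")
  case True
  then have "(\<Sum>j<d. (u j)^2) = 0" using vnorm_sq[of d u] by simp
  then have "\<forall>j<d. u j = 0" by (simp add: sum_nonneg_eq_0_iff)
  then show ?thesis unfolding dotp_def by simp
next
  case False
  have "dotp d u (perp d u w) = (\<Sum>j<d. u j * w j - (dotp d u w / (vnorm d u)^2) * (u j * u j))"
    unfolding dotp_def[of d u "perp d u w"] by (intro sum.cong) (auto simp: perp_def algebra_simps)
  also have "\<dots> = dotp d u w - (dotp d u w / (vnorm d u)^2) * dotp d u u"
    by (simp add: dotp_def sum_subtractf sum_distrib_left)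
  also have "\<dots> = 0" using False by (simp add: dotp_self)
  finally show ?thesis .
qed

lemma dotp_perp_perp:
  "dotp d (perp d u w) z = dotp d (perp d u w) (perp d u z)"
proof -
  define p where "p = perp d u w"
  have "dotp d p (perp d u z) = (\<Sum>j<d. p j * z j - (dotp d u z / (vnorm d u)^2) * (p j * u j))"
    unfolding dotp_def[of d p "perp d u z"] by (intro sum.cong) (auto simp: perp_def[of d u z] algebra_simps)
  also have "\<dots> = dotp d p z - (dotp d u z / (vnorm d u)^2) * dotp d p u"
    by (simp add: dotp_def sum_subtractf sum_distrib_left)
  also have "dotp d p u = 0" using dotp_perp_self[of d u w] by (simp add: dotp_comm p_def)
  finally show ?thesis by (simp add: p_def)
qed

lemma vnorm_perp_le: "vnorm d (perp d u w) \<le> vnorm d w"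
proof -
  define x where "x = vnorm d (perp d u w)"
  define y where "y = vnorm d w"
  have "x^2 = dotp d (perp d u w) (perp d u w)" by (simp add: dotp_self x_def)
  also have "\<dots> = dotp d (perp d u w) w" by (simp add: dotp_perp_perp[symmetric])
  also have "\<dots> \<le> x * y" using dotp_cs[of d "perp d u w" w] by (simp add: x_def y_def)
  finally have xy: "x * x \<le> x * y" by (simp add: power2_eq_square)
  have x0: "x \<ge> 0" "y \<ge> 0" by (simp_all add: x_def y_def vnorm_nonneg)
  show ?thesis
  proof (cases "x = 0")
    case True then show ?thesis using x0 by (simp add: x_def y_def)
  next
    case False
    then have "x > 0" using x0 by simp
    then have "x \<le> y" using xy by (simp add: mult_le_cancel_left_pos)
    then show ?thesis by (simp add: x_def y_def)
  qed
qed

lemma sum_abs_le_sqrt: "(\<Sum>i<n. \<bar>e i\<bar>) \<le> sqrt (real n) * sqrt (\<Sum>i<n. (e i)^2)"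
proof -
  have "(\<Sum>i<n. 1 * \<bar>e i\<bar>)^2 \<le> (\<Sum>i<n. 1^2) * (\<Sum>i<n. \<bar>e i\<bar>^2)" by (rule Cauchy_Schwarz_ineq_sum)
  then have "(\<Sum>i<n. \<bar>e i\<bar>)^2 \<le> real n * (\<Sum>i<n. (e i)^2)" by simp
  then have "sqrt ((\<Sum>i<n. \<bar>e i\<bar>)^2) \<le> sqrt (real n * (\<Sum>i<n. (e i)^2))" by (rule real_sqrt_le_mono)
  moreover have "sqrt ((\<Sum>i<n. \<bar>e i\<bar>)^2) = (\<Sum>i<n. \<bar>e i\<bar>)" by (simp add: sum_nonneg)
  moreover have "sqrt (real n * (\<Sum>i<n. (e i)^2)) = sqrt (real n) * sqrt (\<Sum>i<n. (e i)^2)" by (rule real_sqrt_mult)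
  ultimately show ?thesis by simp
qed





lemma deriv_cont_on:
  assumes "\<And>s. s \<in> {0..T} \<Longrightarrow> (f has_real_derivative D s) (at s within {0..T})"
  shows "continuous_on {0..(T::real)} f"
  unfolding continuous_on_eq_continuous_within using assms DERIV_continuous by blast

lemma mono_T:
  fixes \<psi> :: "real \<Rightarrow> real"
  assumes cont: "continuous_on {0..T} \<psi>" and cS: "countable S"
    and der: "\<And>s. s \<in> {0..T} \<Longrightarrow> s \<notin> S \<Longrightarrow> \<exists>D. (\<psi> has_real_derivative D) (at s within {0..T}) \<and> D \<le> 0"
    and t: "t \<in> {0..T}"
  shows "\<psi> t \<le> \<psi> 0"
proof (rule mono_countable[of 0 t \<psi> S])
  show "0 \<le> t" using t by simp
  show "continuous_on {0..t} \<psi>" using cont t by (auto elim: continuous_on_subset)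
  show "countable S" by fact
  fix s assume s: "s \<in> {0..<t}" "s \<notin> S"
  then have sT: "s \<in> {0..T}" using t by auto
  obtain D where D: "(\<psi> has_real_derivative D) (at s within {0..T})" "D \<le> 0" using der[OF sT s(2)] by blast
  have "(\<psi> has_real_derivative D) (at s within {0..t})"
    by (rule has_field_derivative_subset[OF D(1)]) (use t in auto)
  then show "\<exists>D. (\<psi> has_real_derivative D) (at s within {0..t}) \<and> D \<le> 0" using D(2) by blast
qed

lemma key_alg:
  fixes e :: "nat \<Rightarrow> real" and a b :: "nat \<Rightarrow> nat \<Rightarrow> real" and P :: "nat \<Rightarrow> nat \<Rightarrow> nat \<Rightarrow> real"
    and G :: "nat \<Rightarrow> real" and H :: "nat \<Rightarrow> nat \<Rightarrow> real" and sm :: real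
  assumes G: "\<And>k. k < m \<Longrightarrow> G k = - sm * (\<Sum>j<n. e j * a j k)"
    and H: "\<And>i k. k < m \<Longrightarrow> H i k = - sm * (\<Sum>j<n. e j * b j k * P j i k)"
    and Psym: "\<And>i j k. P j i k = P i j k"
  shows "(\<Sum>i<n. e i * (sm * (\<Sum>k<m. a i k * G k + b i k * H i k)))
       = - quad n (\<lambda>i j. sm^2 * (\<Sum>k<m. a i k * a j k + b i k * b j k * P i j k)) e"
proof -
  have inner: "e i * sm * (a i k * G k + b i k * H i k)
      = (\<Sum>j<n. - (sm^2 * (e i * e j * (a i k * a j k + b i k * b j k * P i j k))))" if k: "k < m" for i k
  proof -
    have "e i * sm * (a i k * G k + b i k * H i k)
        = - (sm^2 * e i) * (a i k * (\<Sum>j<n. e j * a j k) + b i k * (\<Sum>j<n. e j * b j k * P j i k))"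
      by (simp add: G[OF k] H[OF k] algebra_simps power2_eq_square)
    also have "\<dots> = - (sm^2 * e i) * (\<Sum>j<n. e j * (a i k * a j k + b i k * b j k * P i j k))"
      by (simp add: sum_distrib_left sum.distrib[symmetric] Psym algebra_simps)
    also have "\<dots> = (\<Sum>j<n. - (sm^2 * (e i * e j * (a i k * a j k + b i k * b j k * P i j k))))"
      by (simp add: sum_distrib_left sum_negf algebra_simps)
    finally show ?thesis .
  qed
  have "(\<Sum>i<n. e i * (sm * (\<Sum>k<m. a i k * G k + b i k * H i k)))
      = (\<Sum>i<n. \<Sum>k<m. e i * sm * (a i k * G k + b i k * H i k))"
    by (simp add: sum_distrib_left mult.assoc)
  also have "\<dots> = (\<Sum>i<n. \<Sum>k<m. \<Sum>j<n. - (sm^2 * (e i * e j * (a i k * a j k + b i k * b j k * P i j k))))"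
    by (intro sum.cong refl) (simp add: inner)
  also have "\<dots> = (\<Sum>i<n. \<Sum>j<n. \<Sum>k<m. - (sm^2 * (e i * e j * (a i k * a j k + b i k * b j k * P i j k))))"
    by (intro sum.cong refl sum.swap)
  also have "\<dots> = - (\<Sum>i<n. \<Sum>j<n. \<Sum>k<m. sm^2 * (e i * e j * (a i k * a j k + b i k * b j k * P i j k)))"
    by (simp only: sum_negf)
  also have "(\<Sum>i<n. \<Sum>j<n. \<Sum>k<m. sm^2 * (e i * e j * (a i k * a j k + b i k * b j k * P i j k)))
      = quad n (\<lambda>i j. sm^2 * (\<Sum>k<m. a i k * a j k + b i k * b j k * P i j k)) e"
    unfolding quad_def by (intro sum.cong refl) (simp add: sum_distrib_left sum_distrib_right mult_ac)
  finally show ?thesis .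
qed

lemma dotp_neg: "dotp d (\<lambda>j. - f j) z = - dotp d f z"
  unfolding dotp_def by (simp add: sum_negf)

lemma dotp_grad_v:
  "dotp d z (\<lambda>j. grad_v n m d x y c G W k j) = (1 / sqrt m) * (\<Sum>i<n. (fnet m d c G W (x i) - y i) * c k * G k / vnorm d (W k)
        * ind (dotp d (W k) (x i) \<ge> 0) * dotp d z (perp d (W k) (x i)))"
proof -
  have "dotp d z (\<lambda>j. grad_v n m d x y c G W k j)
     = (\<Sum>j<d. \<Sum>i<n. (1 / sqrt m) * ((fnet m d c G W (x i) - y i) * c k * G k / vnorm d (W k)
        * ind (dotp d (W k) (x i) \<ge> 0)) * (z j * perp d (W k) (x i) j))"
    unfolding dotp_def grad_v_def by (simp add: sum_distrib_left mult_ac)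
  also have "\<dots> = (\<Sum>i<n. \<Sum>j<d. (1 / sqrt m) * ((fnet m d c G W (x i) - y i) * c k * G k / vnorm d (W k)
        * ind (dotp d (W k) (x i) \<ge> 0)) * (z j * perp d (W k) (x i) j))"
    by (rule sum.swap)
  also have "\<dots> = (1 / sqrt m) * (\<Sum>i<n. (fnet m d c G W (x i) - y i) * c k * G k / vnorm d (W k)
        * ind (dotp d (W k) (x i) \<ge> 0) * dotp d z (perp d (W k) (x i)))"
    unfolding dotp_def by (simp add: sum_distrib_left sum_distrib_right mult_ac divide_divide_eq_left sum_divide_distrib)
  finally show ?thesis .
qed


locale flowctx =
  fixes n m d :: nat and x :: "nat \<Rightarrow> nat \<Rightarrow> real" and y :: "nat \<Rightarrow> real"
    and \<alpha> \<omega> T Rg :: real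
    and V :: "nat \<Rightarrow> nat \<Rightarrow> real" and c :: "nat \<Rightarrow> real"
    and v :: "real \<Rightarrow> nat \<Rightarrow> nat \<Rightarrow> real" and g :: "real \<Rightarrow> nat \<Rightarrow> real"
  assumes m1: "m \<ge> 1" and apos: "\<alpha> > 0" and wpos: "\<omega> > 0"
    and xb: "\<forall>i<n. vnorm d (x i) \<le> 1"
    and cpm: "\<forall>k<m. c k \<in> {-1, 1}"
    and Vlow: "\<forall>k<m. \<alpha> * Rg \<le> vnorm d (V k)" and Vpos: "\<forall>k<m. vnorm d (V k) > 0"
    and flow: "grad_flow n m d x y \<alpha> T V c v g"
    and lam: "\<forall>t\<in>{0..T}. lambda_min n (\<lambda>i i'. Gmat m d x (v t) i i'
             + (1 / \<alpha>^2) * Vmat m d \<alpha> x c (g t) (v t) i i') \<ge> \<omega> / 2"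
    and gb: "\<forall>t\<in>{0..T}. \<forall>k<m. \<bar>g t k - g 0 k\<bar> \<le> Rg"
begin

definition rho :: "nat \<Rightarrow> real" where "rho k = vnorm d (V k)"

lemma rho_pos: "k < m \<Longrightarrow> rho k > 0"
  using Vpos by (simp add: rho_def)

lemma c2: "k < m \<Longrightarrow> c k * c k = 1"
  using cpm by auto

lemma cabs: "k < m \<Longrightarrow> \<bar>c k\<bar> = 1"
  using cpm by auto

lemma v0: "k < m \<Longrightarrow> j < d \<Longrightarrow> v 0 k j = V k j"
  using flow by (simp add: grad_flow_def)

lemma g0: "k < m \<Longrightarrow> g 0 k = rho k / \<alpha>"
  using flow by (simp add: grad_flow_def rho_def)

lemma dv: "t \<in> {0..T} \<Longrightarrow> k < m \<Longrightarrow> j < d \<Longrightarrow>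
    ((\<lambda>s. v s k j) has_real_derivative (- grad_v n m d x y c (g t) (v t) k j)) (at t within {0..T})"
  using flow by (simp add: grad_flow_def)

lemma dg: "t \<in> {0..T} \<Longrightarrow> k < m \<Longrightarrow>
    ((\<lambda>s. g s k) has_real_derivative (- grad_g n m d x y c (g t) (v t) k)) (at t within {0..T})"
  using flow by (simp add: grad_flow_def)

lemma cont_v: "k < m \<Longrightarrow> j < d \<Longrightarrow> continuous_on {0..T} (\<lambda>s. v s k j)"
  using dv by (intro deriv_cont_on) blast

lemma cont_g: "k < m \<Longrightarrow> continuous_on {0..T} (\<lambda>s. g s k)"
  using dg by (intro deriv_cont_on) blast

lemma sqn_const:
  assumes k: "k < m" and t: "t \<in> {0..T}"
  shows "vnorm d (v t k) = rho k"
proof -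
  define \<psi> where "\<psi> s = (\<Sum>j<d. (v s k j)^2)" for s
  have der: "(\<psi> has_real_derivative 0) (at s within {0..T})" if s: "s \<in> {0..T}" for s
  proof -
    have "(\<psi> has_real_derivative (\<Sum>j<d. 2 * v s k j * (- grad_v n m d x y c (g s) (v s) k j))) (at s within {0..T})"
      unfolding \<psi>_def
      by (intro DERIV_sum) (auto intro!: derivative_eq_intros dv[OF s k] simp: power2_eq_square)
    moreover have "(\<Sum>j<d. 2 * v s k j * (- grad_v n m d x y c (g s) (v s) k j)) = - 2 * dotp d (v s k) (\<lambda>j. grad_v n m d x y c (g s) (v s) k j)"
      by (simp add: dotp_def sum_distrib_left sum_negf mult.assoc)
    moreover have "dotp d (v s k) (\<lambda>j. grad_v n m d x y c (g s) (v s) k j) = 0"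
      unfolding dotp_grad_v by (simp add: dotp_perp_self)
    ultimately show ?thesis by simp
  qed
  have cont: "continuous_on {0..T} \<psi>"
    using der by (intro deriv_cont_on) blast
  have "\<psi> t \<le> \<psi> 0"
    by (rule mono_T[OF cont countable_empty _ t]) (use der in auto)
  moreover have "(\<lambda>s. - \<psi> s) t \<le> (\<lambda>s. - \<psi> s) 0"
  proof (rule mono_T[OF _ countable_empty _ t])
    show "continuous_on {0..T} (\<lambda>s. - \<psi> s)" using cont by (intro continuous_intros)
    fix s assume s: "s \<in> {0..T}"
    have "((\<lambda>s. - \<psi> s) has_real_derivative - 0) (at s within {0..T})" using der[OF s] by (rule DERIV_minus)
    then show "\<exists>D. ((\<lambda>s. - \<psi> s) has_real_derivative D) (at s within {0..T}) \<and> D \<le> 0" by auto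
  qed
  ultimately have "\<psi> t = \<psi> 0" by simp
  also have "\<psi> 0 = (\<Sum>j<d. (V k j)^2)" unfolding \<psi>_def using v0[OF k] by simp
  finally show ?thesis unfolding vnorm_def rho_def \<psi>_def by simp
qed

lemma g_bounds:
  assumes k: "k < m" and t: "t \<in> {0..T}"
  shows "0 \<le> g t k" "g t k \<le> 2 * rho k / \<alpha>"
proof -
  have "\<bar>g t k - g 0 k\<bar> \<le> Rg" using gb t k by blast
  then have "\<bar>g t k - rho k / \<alpha>\<bar> \<le> Rg" using g0[OF k] by simp
  moreover have "Rg \<le> rho k / \<alpha>" using Vlow k apos by (simp add: rho_def field_simps)
  ultimately show "0 \<le> g t k" "g t k \<le> 2 * rho k / \<alpha>" by (auto simp: abs_le_iff)
qed

lemma relu_scale: "a \<ge> 0 \<Longrightarrow> r > 0 \<Longrightarrow> relu (a * h / r) = a * relu h / r"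
  unfolding relu_def by (cases "h \<ge> 0") (auto simp: max_def mult_nonneg_nonneg divide_nonneg_pos mult_le_0_iff divide_le_0_iff)

lemma fnet_rep:
  assumes t: "t \<in> {0..T}"
  shows "fnet m d c (g t) (v t) z = (1 / sqrt m) * (\<Sum>k<m. c k * (g t k * relu (dotp d (v t k) z) / rho k))"
  unfolding fnet_def
  by (intro arg_cong2[where f="(*)"] refl sum.cong) (simp add: sqn_const[OF _ t] relu_scale g_bounds(1)[OF _ t] rho_pos)


definition E :: "nat \<Rightarrow> real \<Rightarrow> real" where "E i t = fnet m d c (g t) (v t) (x i) - y i"
definition H :: "nat \<Rightarrow> nat \<Rightarrow> real \<Rightarrow> real" where "H i k t = dotp d (v t k) (x i)"
definition H' :: "nat \<Rightarrow> nat \<Rightarrow> real \<Rightarrow> real" where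
  "H' i k t = dotp d (\<lambda>j. - grad_v n m d x y c (g t) (v t) k j) (x i)"
definition G' :: "nat \<Rightarrow> real \<Rightarrow> real" where "G' k t = - grad_g n m d x y c (g t) (v t) k"
definition aa :: "real \<Rightarrow> nat \<Rightarrow> nat \<Rightarrow> real" where "aa t i k = c k * relu (H i k t) / rho k"
definition bb :: "real \<Rightarrow> nat \<Rightarrow> nat \<Rightarrow> real" where "bb t i k = c k * g t k * ind (H i k t \<ge> 0) / rho k"
definition PP :: "real \<Rightarrow> nat \<Rightarrow> nat \<Rightarrow> nat \<Rightarrow> real" where
  "PP t i j k = dotp d (perp d (v t k) (x i)) (perp d (v t k) (x j))"
definition Mt :: "real \<Rightarrow> nat \<Rightarrow> nat \<Rightarrow> real" where
  "Mt t i j = Gmat m d x (v t) i j + (1 / \<alpha>^2) * Vmat m d \<alpha> x c (g t) (v t) i j"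
definition DE :: "nat \<Rightarrow> real \<Rightarrow> real" where
  "DE i t = (1 / sqrt m) * (\<Sum>k<m. aa t i k * G' k t + bb t i k * H' i k t)"
definition Sb :: "real set" where
  "Sb = {t \<in> {0..T}. \<exists>i<n. \<exists>k<m. H i k t = 0 \<and> H' i k t \<noteq> 0}"

lemma dH:
  assumes t: "t \<in> {0..T}" and k: "k < m"
  shows "((\<lambda>s. H i k s) has_real_derivative H' i k t) (at t within {0..T})"
  unfolding H_def H'_def dotp_def
  by (intro DERIV_sum) (auto intro!: derivative_eq_intros dv[OF t k])

lemma G'_form:
  assumes t: "t \<in> {0..T}" and k: "k < m"
  shows "G' k t = - (1 / sqrt m) * (\<Sum>j<n. E j t * aa t j k)"
  unfolding G'_def grad_g_def E_def aa_def H_def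
  by (simp add: sqn_const[OF k t] rho_def[symmetric] sum_distrib_left mult_ac sum_negf)

lemma H'_form:
  assumes t: "t \<in> {0..T}" and k: "k < m"
  shows "H' i k t = - (1 / sqrt m) * (\<Sum>j<n. E j t * bb t j k * PP t j i k)"
proof -
  have "H' i k t = - dotp d (x i) (\<lambda>j. grad_v n m d x y c (g t) (v t) k j)"
    unfolding H'_def by (simp add: dotp_neg dotp_comm)
  also have "\<dots> = - (1 / sqrt m) * (\<Sum>j<n. E j t * bb t j k * PP t j i k)"
    unfolding dotp_grad_v
    by (simp add: E_def bb_def PP_def H_def sqn_const[OF k t] rho_def[symmetric] dotp_comm[of d "x i"]
        dotp_perp_perp[of d "v t k" _ "x i"] mult_ac)
  finally show ?thesis .
qed

lemma PP_sym: "PP t j i k = PP t i j k"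
  unfolding PP_def by (rule dotp_comm)

lemma Mt_form:
  assumes t: "t \<in> {0..T}"
  shows "Mt t i j = (1 / sqrt m)^2 * (\<Sum>k<m. aa t i k * aa t j k + bb t i k * bb t j k * PP t i j k)"
proof -
  have "Mt t i j = (1 / real m) * (\<Sum>k<m. relu (dotp d (v t k) (x i)) * relu (dotp d (v t k) (x j)) / (vnorm d (v t k))^2
      + (1 / \<alpha>^2) * ((\<alpha> * c k * g t k / vnorm d (v t k))^2
      * dotp d (perp d (v t k) (x i)) (perp d (v t k) (x j))
      * ind (dotp d (v t k) (x i) \<ge> 0) * ind (dotp d (v t k) (x j) \<ge> 0)))"
    unfolding Mt_def Gmat_def Vmat_def by (simp add: sum.distrib sum_distrib_left algebra_simps)
  also have "\<dots> = (1 / real m) * (\<Sum>k<m. aa t i k * aa t j k + bb t i k * bb t j k * PP t i j k)"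
  proof (intro arg_cong2[where f="(*)"] refl sum.cong)
    fix k assume "k \<in> {..<m}"
    then have k: "k < m" by simp
    have r: "rho k > 0" by (rule rho_pos[OF k])
    have cc: "c k * c k = 1" by (rule c2[OF k])
    show "relu (dotp d (v t k) (x i)) * relu (dotp d (v t k) (x j)) / (vnorm d (v t k))^2
      + (1 / \<alpha>^2) * ((\<alpha> * c k * g t k / vnorm d (v t k))^2
      * dotp d (perp d (v t k) (x i)) (perp d (v t k) (x j))
      * ind (dotp d (v t k) (x i) \<ge> 0) * ind (dotp d (v t k) (x j) \<ge> 0))
      = aa t i k * aa t j k + bb t i k * bb t j k * PP t i j k"
      unfolding aa_def bb_def PP_def H_def sqn_const[OF k t] using r apos cc
      by (simp add: field_simps power2_eq_square)
  qed
  also have "(1 / real m) = (1 / sqrt m)^2" using m1 by (simp add: power_divide)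
  finally show ?thesis .
qed

lemma Mt_sym: "t \<in> {0..T} \<Longrightarrow> Mt t i j = Mt t j i"
  unfolding Mt_form by (intro arg_cong2[where f="(*)"] refl sum.cong) (simp_all add: PP_sym mult_ac)

lemma key_identity:
  assumes t: "t \<in> {0..T}"
  shows "(\<Sum>i<n. E i t * DE i t) = - quad n (Mt t) (\<lambda>i. E i t)"
proof -
  have "(\<Sum>i<n. E i t * DE i t) = - quad n (\<lambda>i j. (1 / sqrt m)^2 * (\<Sum>k<m. aa t i k * aa t j k + bb t i k * bb t j k * PP t i j k)) (\<lambda>i. E i t)"
    unfolding DE_def
    by (rule key_alg[where G="\<lambda>k. G' k t" and H="\<lambda>i k. H' i k t"])
       (simp_all add: G'_form[OF t] H'_form[OF t] PP_sym)
  also have "(\<lambda>i j. (1 / sqrt m)^2 * (\<Sum>k<m. aa t i k * aa t j k + bb t i k * bb t j k * PP t i j k)) = Mt t"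
    using Mt_form[OF t] by (intro ext) simp
  finally show ?thesis .
qed

lemma quad_lower:
  assumes t: "t \<in> {0..T}"
  shows "(\<omega> / 2) * nsq n (\<lambda>i. E i t) \<le> quad n (Mt t) (\<lambda>i. E i t)"
proof (rule rayleigh)
  show "\<And>i j. i < n \<Longrightarrow> j < n \<Longrightarrow> Mt t i j = Mt t j i" using Mt_sym[OF t] by blast
  show "\<omega> / 2 \<le> lambda_min n (Mt t)" using lam t unfolding Mt_def by blast
qed


lemma E_rep:
  assumes t: "t \<in> {0..T}"
  shows "E i t = (1 / sqrt m) * (\<Sum>k<m. c k * (g t k * relu (H i k t) / rho k)) - y i"
  unfolding E_def H_def fnet_rep[OF t] ..

lemma cont_E: "continuous_on {0..T} (\<lambda>s. E i s)"
proof -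
  have "continuous_on {0..T} (\<lambda>s. (1 / sqrt m) * (\<Sum>k<m. c k * (g s k * max (\<Sum>j<d. v s k j * x i j) 0 / rho k)) - y i)"
    using m1 rho_pos by (auto intro!: continuous_intros cont_v cont_g simp: less_imp_neq[symmetric])
  then show ?thesis
    by (rule continuous_on_cong[THEN iffD1, rotated 2]) (auto simp: E_rep H_def dotp_def relu_def)
qed

lemma countable_Sb: "countable Sb"
proof -
  have "Sb = (\<Union>i\<in>{..<n}. \<Union>k\<in>{..<m}. {t \<in> {0..T}. H i k t = 0 \<and> H' i k t \<noteq> 0})"
    unfolding Sb_def by blast
  moreover have C: "countable {t \<in> {0..T}. H i k t = 0 \<and> H' i k t \<noteq> 0}" if k: "k < m" for i k
  proof (rule countable_discrete_real)
    fix t assume "t \<in> {t \<in> {0..T}. H i k t = 0 \<and> H' i k t \<noteq> 0}"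
    then have t: "t \<in> {0..T}" "H i k t = 0" "H' i k t \<noteq> 0" by auto
    obtain e where e: "e > 0" "\<forall>s\<in>{0..T}. s \<noteq> t \<longrightarrow> dist s t < e \<longrightarrow> H i k s \<noteq> 0"
      using deriv_nonzero_isolated[OF dH[OF t(1) k] t(3) t(2)] by blast
    show "\<exists>e>0. \<forall>s\<in>{t \<in> {0..T}. H i k t = 0 \<and> H' i k t \<noteq> 0}. s \<noteq> t \<longrightarrow> e \<le> \<bar>s - t\<bar>"
    proof (intro exI[of _ e] conjI ballI impI)
      fix s assume s: "s \<in> {t \<in> {0..T}. H i k t = 0 \<and> H' i k t \<noteq> 0}" "s \<noteq> t"
      then have "\<not> dist s t < e" using e(2) by auto
      then show "e \<le> \<bar>s - t\<bar>" by (simp add: dist_real_def)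
    qed (rule e(1))
  qed
  moreover have "countable (\<Union>i\<in>{..<n}. \<Union>k\<in>{..<m}. {t \<in> {0..T}. H i k t = 0 \<and> H' i k t \<noteq> 0})"
  proof (rule countable_UN[OF countable_finite])
    fix i show "countable (\<Union>k\<in>{..<m}. {t \<in> {0..T}. H i k t = 0 \<and> H' i k t \<noteq> 0})"
      by (rule countable_UN[OF countable_finite]) (use C in auto)
  qed auto
  ultimately show ?thesis by simp
qed

lemma dE:
  assumes t: "t \<in> {0..T}" and nb: "t \<notin> Sb" and i: "i < n"
  shows "((\<lambda>s. E i s) has_real_derivative DE i t) (at t within {0..T})"
proof -
  have dk: "((\<lambda>s. c k * (g s k * relu (H i k s) / rho k)) has_real_derivative (aa t i k * G' k t + bb t i k * H' i k t)) (at t within {0..T})"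
    if k: "k \<in> {..<m}" for k
  proof -
    have k': "k < m" using k by simp
    have nbk: "\<not> (H i k t = 0 \<and> H' i k t \<noteq> 0)" using nb t i k' unfolding Sb_def by blast
    have rd: "((\<lambda>s. relu (H i k s)) has_real_derivative (ind (H i k t \<ge> 0) * H' i k t)) (at t within {0..T})"
      by (rule relu_deriv[OF dH[OF t k'] nbk])
    have gd: "((\<lambda>s. g s k) has_real_derivative G' k t) (at t within {0..T})"
      unfolding G'_def by (rule dg[OF t k'])
    have "((\<lambda>s. c k * (g s k * relu (H i k s) / rho k)) has_real_derivative
        c k * ((G' k t * relu (H i k t) + (ind (H i k t \<ge> 0) * H' i k t) * g t k) / rho k)) (at t within {0..T})"
      by (intro DERIV_cmult DERIV_cdivide DERIV_mult gd rd)
    moreover have "c k * ((G' k t * relu (H i k t) + (ind (H i k t \<ge> 0) * H' i k t) * g t k) / rho k)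
        = aa t i k * G' k t + bb t i k * H' i k t"
      unfolding aa_def bb_def by (simp add: algebra_simps add_divide_distrib)
    ultimately show ?thesis by simp
  qed
  have "((\<lambda>s. (1 / sqrt m) * (\<Sum>k<m. c k * (g s k * relu (H i k s) / rho k)) - y i) has_real_derivative
      (1 / sqrt m) * (\<Sum>k<m. aa t i k * G' k t + bb t i k * H' i k t) - 0) (at t within {0..T})"
    by (intro DERIV_diff DERIV_cmult DERIV_sum DERIV_const dk)
  then have d1: "((\<lambda>s. (1 / sqrt m) * (\<Sum>k<m. c k * (g s k * relu (H i k s) / rho k)) - y i) has_real_derivative
      DE i t) (at t within {0..T})" by (simp add: DE_def)
  have ev: "eventually (\<lambda>s. E i s = (1 / sqrt m) * (\<Sum>k<m. c k * (g s k * relu (H i k s) / rho k)) - y i) (at t within {0..T})"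
    unfolding eventually_at_filter by (intro always_eventually) (auto simp: E_rep)
  show ?thesis
    using d1 has_field_derivative_cong_eventually[OF ev E_rep[OF t]] by simp
qed

lemma decay:
  assumes t: "t \<in> {0..T}"
  shows "nsq n (\<lambda>i. E i t) \<le> exp (- \<omega> * t) * nsq n (\<lambda>i. E i 0)"
proof -
  define \<phi> where "\<phi> s = (\<Sum>i<n. (E i s)^2)" for s
  define \<psi> where "\<psi> s = exp (\<omega> * s) * \<phi> s" for s
  have cont: "continuous_on {0..T} \<psi>" unfolding \<psi>_def \<phi>_def
    by (intro continuous_intros cont_E)
  have der: "\<exists>D. (\<psi> has_real_derivative D) (at s within {0..T}) \<and> D \<le> 0" if s: "s \<in> {0..T}" "s \<notin> Sb" for s
  proof -
    have dphi: "(\<phi> has_real_derivative (\<Sum>i<n. 2 * E i s * DE i s)) (at s within {0..T})"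
      unfolding \<phi>_def
      by (intro DERIV_sum) (auto intro!: derivative_eq_intros dE[OF s] simp: power2_eq_square)
    have dpsi: "(\<psi> has_real_derivative (exp (\<omega> * s) * \<omega> * \<phi> s + exp (\<omega> * s) * (\<Sum>i<n. 2 * E i s * DE i s))) (at s within {0..T})"
      unfolding \<psi>_def by (auto intro!: derivative_eq_intros dphi)
    have "(\<Sum>i<n. 2 * E i s * DE i s) = 2 * (\<Sum>i<n. E i s * DE i s)"
      by (simp add: sum_distrib_left mult.assoc)
    also have "\<dots> = - 2 * quad n (Mt s) (\<lambda>i. E i s)"
      using key_identity[OF s(1)] by simp
    also have "\<dots> \<le> - 2 * ((\<omega> / 2) * nsq n (\<lambda>i. E i s))" using quad_lower[OF s(1)] by simp
    also have "\<dots> = - \<omega> * \<phi> s" by (simp add: \<phi>_def nsq_def)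
    finally have "(\<Sum>i<n. 2 * E i s * DE i s) \<le> - \<omega> * \<phi> s" .
    then have "exp (\<omega> * s) * \<omega> * \<phi> s + exp (\<omega> * s) * (\<Sum>i<n. 2 * E i s * DE i s) \<le> exp (\<omega> * s) * \<omega> * \<phi> s + exp (\<omega> * s) * (- \<omega> * \<phi> s)"
      by (intro add_left_mono mult_left_mono) auto
    also have "\<dots> = 0" by (simp add: algebra_simps)
    finally show ?thesis using dpsi by blast
  qed
  have "\<psi> t \<le> \<psi> 0" by (rule mono_T[OF cont countable_Sb der t])
  then have "exp (\<omega> * t) * \<phi> t \<le> \<phi> 0" by (simp add: \<psi>_def)
  then have "\<phi> t \<le> \<phi> 0 / exp (\<omega> * t)" by (simp add: field_simps)
  then show ?thesis by (simp add: \<phi>_def nsq_def exp_minus field_simps)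
qed


lemma nsq_E_nonneg: "nsq n (\<lambda>i. E i s) \<ge> 0"
  by (rule nsq_nonneg)

lemma grad_bound:
  assumes s: "s \<in> {0..T}" and k: "k < m" and u: "vnorm d u \<le> 1"
  shows "dotp d u (\<lambda>j. - grad_v n m d x y c (g s) (v s) k j)
     \<le> (2 * sqrt n / (\<alpha> * sqrt m)) * (exp (- \<omega> * s / 2) * sqrt (nsq n (\<lambda>i. E i 0)))"
proof -
  define q where "q i = c k * g s k / rho k * ind (dotp d (v s k) (x i) \<ge> 0) * dotp d u (perp d (v s k) (x i))" for i
  have e1: "dotp d u (\<lambda>j. - grad_v n m d x y c (g s) (v s) k j) = - ((1 / sqrt m) * (\<Sum>i<n. E i s * q i))"
    unfolding dotp_comm[of d u] dotp_neg unfolding dotp_comm[of d _ u] dotp_grad_v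
    by (simp add: E_def q_def sqn_const[OF k s] rho_def[symmetric] mult_ac)
  have qb: "\<bar>q i\<bar> \<le> 2 / \<alpha>" if i: "i < n" for i
  proof -
    have r: "rho k > 0" by (rule rho_pos[OF k])
    have gk: "0 \<le> g s k / rho k" "g s k / rho k \<le> 2 / \<alpha>"
      using g_bounds[OF k s] r apos by (auto simp: field_simps)
    have ib: "\<bar>ind (dotp d (v s k) (x i) \<ge> 0)\<bar> \<le> 1" by (simp add: ind_def)
    have "\<bar>dotp d u (perp d (v s k) (x i))\<bar> \<le> vnorm d u * vnorm d (perp d (v s k) (x i))" by (rule dotp_cs)
    also have "\<dots> \<le> 1 * 1"
      using u vnorm_perp_le[of d "v s k" "x i"] xb i vnorm_nonneg[of d u] vnorm_nonneg[of d "perp d (v s k) (x i)"]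
      by (intro mult_mono) auto
    finally have db: "\<bar>dotp d u (perp d (v s k) (x i))\<bar> \<le> 1" by simp
    have "\<bar>q i\<bar> = \<bar>c k\<bar> * (g s k / rho k) * \<bar>ind (dotp d (v s k) (x i) \<ge> 0)\<bar> * \<bar>dotp d u (perp d (v s k) (x i))\<bar>"
      unfolding q_def using gk g_bounds(1)[OF k s] r by (simp add: abs_mult)
    also have "\<dots> \<le> 1 * (2 / \<alpha>) * 1 * 1"
      using cabs[OF k] gk ib db apos by (intro mult_mono) auto
    finally show ?thesis by simp
  qed
  have "dotp d u (\<lambda>j. - grad_v n m d x y c (g s) (v s) k j) \<le> (1 / sqrt m) * \<bar>\<Sum>i<n. E i s * q i\<bar>"
    unfolding e1 using divide_right_mono[of "- (\<Sum>i<n. E i s * q i)" "\<bar>\<Sum>i<n. E i s * q i\<bar>" "sqrt m"] by simp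
  also have "\<dots> \<le> (1 / sqrt m) * (\<Sum>i<n. \<bar>E i s\<bar> * (2 / \<alpha>))"
  proof (intro mult_left_mono)
    have "\<bar>\<Sum>i<n. E i s * q i\<bar> \<le> (\<Sum>i<n. \<bar>E i s * q i\<bar>)" by (rule sum_abs)
    also have "\<dots> \<le> (\<Sum>i<n. \<bar>E i s\<bar> * (2 / \<alpha>))"
    proof (intro sum_mono)
      fix i assume "i \<in> {..<n}"
      then have "\<bar>q i\<bar> \<le> 2 / \<alpha>" using qb by simp
      then have "\<bar>E i s\<bar> * \<bar>q i\<bar> \<le> \<bar>E i s\<bar> * (2 / \<alpha>)" by (rule mult_left_mono) simp
      then show "\<bar>E i s * q i\<bar> \<le> \<bar>E i s\<bar> * (2 / \<alpha>)" by (simp only: abs_mult)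
    qed
    finally show "\<bar>\<Sum>i<n. E i s * q i\<bar> \<le> (\<Sum>i<n. \<bar>E i s\<bar> * (2 / \<alpha>))" .
  qed simp
  also have "\<dots> = (1 / sqrt m) * ((\<Sum>i<n. \<bar>E i s\<bar>) * (2 / \<alpha>))"
    by (simp only: sum_distrib_right)
  also have "\<dots> = (2 / (\<alpha> * sqrt m)) * (\<Sum>i<n. \<bar>E i s\<bar>)"
  proof -
    have "\<And>X::real. (1 / sqrt m) * (X * (2 / \<alpha>)) = (2 / (\<alpha> * sqrt m)) * X" by (simp add: field_simps)
    then show ?thesis .
  qed
  also have "\<dots> \<le> (2 / (\<alpha> * sqrt m)) * (sqrt n * sqrt (nsq n (\<lambda>i. E i s)))"
    using sum_abs_le_sqrt[where n=n and e="\<lambda>i. E i s"] apos by (intro mult_left_mono) (auto simp: nsq_def)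
  also have "\<dots> \<le> (2 / (\<alpha> * sqrt m)) * (sqrt n * (exp (- \<omega> * s / 2) * sqrt (nsq n (\<lambda>i. E i 0))))"
  proof -
    have ex: "exp (- \<omega> * s) = (exp (- \<omega> * s / 2))^2"
      by (simp add: power2_eq_square exp_add[symmetric])
    have "sqrt (nsq n (\<lambda>i. E i s)) \<le> sqrt (exp (- \<omega> * s) * nsq n (\<lambda>i. E i 0))"
      using decay[OF s] by (rule real_sqrt_le_mono)
    also have "\<dots> = exp (- \<omega> * s / 2) * sqrt (nsq n (\<lambda>i. E i 0))"
      unfolding ex real_sqrt_mult by simp
    finally show ?thesis using apos by (intro mult_left_mono) auto
  qed
  also have "\<dots> = (2 * sqrt n / (\<alpha> * sqrt m)) * (exp (- \<omega> * s / 2) * sqrt (nsq n (\<lambda>i. E i 0)))"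
    by simp
  finally show ?thesis .
qed

lemma vnorm_scale: "vnorm d (\<lambda>j. a * w j) = \<bar>a\<bar> * vnorm d w"
proof -
  have "vnorm d (\<lambda>j. a * w j) = sqrt (a^2 * (\<Sum>j<d. (w j)^2))"
    unfolding vnorm_def by (simp add: power_mult_distrib sum_distrib_left)
  also have "\<dots> = \<bar>a\<bar> * vnorm d w" unfolding vnorm_def real_sqrt_mult by simp
  finally show ?thesis .
qed

lemma final_bound:
  assumes k: "k < m" and t: "t \<in> {0..T}"
  shows "vnorm d (\<lambda>j. v t k j - v 0 k j)
     \<le> 4 * sqrt n * sqrt (\<Sum>i<n. (fnet m d c (g 0) (v 0) (x i) - y i)^2) / (\<alpha> * \<omega> * sqrt m)"
proof -
  define K0 where "K0 = sqrt (nsq n (\<lambda>i. E i 0))"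
  have K0': "K0 = sqrt (\<Sum>i<n. (fnet m d c (g 0) (v 0) (x i) - y i)^2)" by (simp add: K0_def nsq_def E_def)
  have K0n: "K0 \<ge> 0" by (simp add: K0_def nsq_nonneg)
  define C where "C = 2 * sqrt n / (\<alpha> * sqrt m) * K0"
  have C0: "C \<ge> 0" using apos K0n by (simp add: C_def)
  have goal: "4 * sqrt n * K0 / (\<alpha> * \<omega> * sqrt m) = 2 * C / \<omega>"
    using wpos apos by (simp add: C_def field_simps)
  define w where "w j = v t k j - v 0 k j" for j
  define nw where "nw = vnorm d w"
  have wfun: "(\<lambda>j. v t k j - v 0 k j) = w" by (rule ext) (simp add: w_def)
  show ?thesis
  proof (cases "nw = 0")
    case True
    then show ?thesis unfolding K0'[symmetric] wfun using C0 wpos by (simp add: goal nw_def)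
  next
    case False
    then have nwp: "nw > 0" using vnorm_nonneg[of d w] by (simp add: nw_def)
    define u where "u j = (1 / nw) * w j" for j
    have un: "vnorm d u \<le> 1" unfolding u_def vnorm_scale using nwp by (simp add: nw_def)
    define \<Phi> where "\<Phi> s = dotp d u (\<lambda>j. v s k j - V k j) + (2 * C / \<omega>) * exp (- \<omega> * s / 2)" for s
    have dPhi: "(\<Phi> has_real_derivative (dotp d u (\<lambda>j. - grad_v n m d x y c (g s) (v s) k j)
        + (2 * C / \<omega>) * (exp (- \<omega> * s / 2) * (- \<omega> / 2)))) (at s within {0..T})" if s: "s \<in> {0..T}" for s
      unfolding \<Phi>_def dotp_def
      by (intro DERIV_add DERIV_cmult DERIV_sum) (auto intro!: derivative_eq_intros dv[OF s k])
    have cont: "continuous_on {0..T} \<Phi>" using dPhi by (intro deriv_cont_on) blast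
    have "\<Phi> t \<le> \<Phi> 0"
    proof (rule mono_T[OF cont countable_empty _ t])
      fix s assume s: "s \<in> {0..T}"
      have "dotp d u (\<lambda>j. - grad_v n m d x y c (g s) (v s) k j) + (2 * C / \<omega>) * (exp (- \<omega> * s / 2) * (- \<omega> / 2))
          = dotp d u (\<lambda>j. - grad_v n m d x y c (g s) (v s) k j) - C * exp (- \<omega> * s / 2)"
        using wpos by (simp add: field_simps)
      also have "\<dots> \<le> 0" using grad_bound[OF s k un] by (simp add: C_def K0_def mult_ac)
      finally show "\<exists>D. (\<Phi> has_real_derivative D) (at s within {0..T}) \<and> D \<le> 0" using dPhi[OF s] by blast
    qed
    moreover have "\<Phi> 0 = 2 * C / \<omega>"
      unfolding \<Phi>_def dotp_def using v0[OF k] by simp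
    moreover have "dotp d u (\<lambda>j. v t k j - V k j) = nw"
    proof -
      have "dotp d u (\<lambda>j. v t k j - V k j) = (1 / nw) * (\<Sum>j<d. (w j)^2)"
        unfolding dotp_def u_def w_def using v0[OF k] by (simp add: sum_distrib_left power2_eq_square)
      also have "\<dots> = (1 / nw) * nw^2" by (simp add: nw_def vnorm_sq)
      also have "\<dots> = nw" using nwp by (simp add: power2_eq_square)
      finally show ?thesis .
    qed
    ultimately have "nw + (2 * C / \<omega>) * exp (- \<omega> * t / 2) \<le> 2 * C / \<omega>" by (simp add: \<Phi>_def)
    moreover have "(2 * C / \<omega>) * exp (- \<omega> * t / 2) \<ge> 0" using C0 wpos by simp
    ultimately have "nw \<le> 2 * C / \<omega>" by linarith
    then show ?thesis unfolding K0'[symmetric] goal wfun by (simp add: nw_def)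
  qed
qed

end


theorem lemmaB7:
  fixes n m d :: nat and x :: "nat \<Rightarrow> nat \<Rightarrow> real" and y :: "nat \<Rightarrow> real"
    and \<alpha> T \<omega> R\<^sub>g \<delta> :: real
  assumes "d \<ge> 1" and "m \<ge> 1" and "\<alpha> > 0" and "\<omega> > 0" and "\<delta> > 0"
    and "\<forall>i<n. vnorm d (x i) \<le> 1"
    and "R\<^sub>g \<le> 1 / ((real m / \<delta>) powr (1 / real d))"
  shows "\<exists>E \<in> sets (init_measure m d \<alpha>). measure (init_measure m d \<alpha>) E \<ge> 1 - \<delta> \<and>
     (\<forall>(V, c) \<in> E. \<forall>v g.
        grad_flow n m d x y \<alpha> T V c v g \<and>
        (\<forall>t\<in>{0..T}. lambda_min n (\<lambda>i i'. Gmat m d x (v t) i i'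
             + (1 / \<alpha>^2) * Vmat m d \<alpha> x c (g t) (v t) i i') \<ge> \<omega> / 2) \<and>
        (\<forall>t\<in>{0..T}. \<forall>k<m. \<bar>g t k - g 0 k\<bar> \<le> R\<^sub>g)
        \<longrightarrow> (\<forall>k<m. \<forall>t\<in>{0..T}.
              vnorm d (\<lambda>j. v t k j - v 0 k j)
              \<le> 4 * sqrt n * sqrt (\<Sum>i<n. (fnet m d c (g 0) (v 0) (x i) - y i)^2)
                / (\<alpha> * \<omega> * sqrt m)))"
proof -
  note d1 = assms(1) and m1 = assms(2) and apos = assms(3) and wpos = assms(4) and dpos = assms(5)
    and xb = assms(6) and Rg = assms(7)
  define r where "r = (\<delta> / real m) powr (1 / real d)"
  have mpos: "real m > 0" using m1 by simp
  have r0: "r > 0" unfolding r_def using dpos mpos by simp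
  have rd: "real m * r ^ d = \<delta>"
  proof -
    have "r ^ d = r powr real d" using r0 by (simp add: powr_realpow)
    also have "\<dots> = (\<delta> / real m) powr (1 / real d * real d)" unfolding r_def by (simp add: powr_powr)
    also have "\<dots> = \<delta> / real m" using d1 dpos mpos by simp
    finally show ?thesis using mpos by simp
  qed
  have Rgr: "R\<^sub>g \<le> r"
  proof -
    have "(real m / \<delta>) powr (1 / real d) = real m powr (1 / real d) / \<delta> powr (1 / real d)"
      using dpos mpos by (simp add: powr_divide)
    then have "1 / ((real m / \<delta>) powr (1 / real d)) = \<delta> powr (1 / real d) / real m powr (1 / real d)" by simp
    also have "\<dots> = r" unfolding r_def using dpos mpos by (simp add: powr_divide)
    finally show ?thesis using Rg by simp
  qed
  obtain E where EM: "E \<in> sets (init_measure m d \<alpha>)" and mE: "measure (init_measure m d \<alpha>) E \<ge> 1 - real m * r ^ d"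
    and EP: "\<forall>(V, c) \<in> E. (\<forall>k<m. c k \<in> {-1, 1}) \<and> (\<forall>k<m. \<exists>j<d. \<alpha> * r \<le> \<bar>V k j\<bar>)"
    using prob_part[OF apos less_imp_le[OF r0] m1, of d] by blast
  show ?thesis
  proof (intro bexI[OF _ EM] conjI)
    show "measure (init_measure m d \<alpha>) E \<ge> 1 - \<delta>" using mE rd by simp
    show "\<forall>(V, c) \<in> E. \<forall>v g.
        grad_flow n m d x y \<alpha> T V c v g \<and>
        (\<forall>t\<in>{0..T}. lambda_min n (\<lambda>i i'. Gmat m d x (v t) i i'
             + (1 / \<alpha>^2) * Vmat m d \<alpha> x c (g t) (v t) i i') \<ge> \<omega> / 2) \<and>
        (\<forall>t\<in>{0..T}. \<forall>k<m. \<bar>g t k - g 0 k\<bar> \<le> R\<^sub>g)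
        \<longrightarrow> (\<forall>k<m. \<forall>t\<in>{0..T}.
              vnorm d (\<lambda>j. v t k j - v 0 k j)
              \<le> 4 * sqrt n * sqrt (\<Sum>i<n. (fnet m d c (g 0) (v 0) (x i) - y i)^2)
                / (\<alpha> * \<omega> * sqrt m))"
    proof -
      have main: "\<forall>k<m. \<forall>t\<in>{0..T}. vnorm d (\<lambda>j. v t k j - v 0 k j)
              \<le> 4 * sqrt n * sqrt (\<Sum>i<n. (fnet m d c (g 0) (v 0) (x i) - y i)^2) / (\<alpha> * \<omega> * sqrt m)"
        if VcE: "(V, c) \<in> E"
        and fl: "grad_flow n m d x y \<alpha> T V c v g"
        and la: "\<forall>t\<in>{0..T}. lambda_min n (\<lambda>i i'. Gmat m d x (v t) i i'
             + (1 / \<alpha>^2) * Vmat m d \<alpha> x c (g t) (v t) i i') \<ge> \<omega> / 2"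
        and gbd: "\<forall>t\<in>{0..T}. \<forall>k<m. \<bar>g t k - g 0 k\<bar> \<le> R\<^sub>g"
        for V c v g
      proof -
      have P: "(\<forall>k<m. c k \<in> {-1, 1})" "(\<forall>k<m. \<exists>j<d. \<alpha> * r \<le> \<bar>V k j\<bar>)" using EP VcE by auto
      have Vr: "\<alpha> * r \<le> vnorm d (V k)" if k: "k < m" for k
      proof -
        obtain j where j: "j < d" "\<alpha> * r \<le> \<bar>V k j\<bar>" using P(2) k by blast
        then show ?thesis using coord_le_vnorm[OF j(1), of "V k"] by linarith
      qed
      interpret F: flowctx n m d x y \<alpha> \<omega> T R\<^sub>g V c v g
      proof
        show "\<forall>k<m. \<alpha> * R\<^sub>g \<le> vnorm d (V k)"
          using Vr Rgr apos by (meson mult_left_mono less_imp_le order_trans)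
        show "\<forall>k<m. vnorm d (V k) > 0"
          using Vr r0 apos by (meson mult_pos_pos order_less_le_trans)
      qed (use m1 apos wpos xb P(1) fl la gbd in auto)
      show "\<forall>k<m. \<forall>t\<in>{0..T}. vnorm d (\<lambda>j. v t k j - v 0 k j)
              \<le> 4 * sqrt n * sqrt (\<Sum>i<n. (fnet m d c (g 0) (v 0) (x i) - y i)^2) / (\<alpha> * \<omega> * sqrt m)"
        using F.final_bound by blast
      qed
      show ?thesis using main by auto
    qed
  qed
qed


end
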